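(* In the setting below, for each $N\in\mathbb N$ let $u_N:\Omega\to U$ be measurable with values in $\mathcal D(\psi)$. If $\varepsilon>0$ and $$N\ge \frac{12\,r_{\mathrm{ad}}^2\tau_{\mathrm Df}^2}{\varepsilon^2}\,\mathcal N\big(\varepsilon/(4r_{\mathrm{ad}}\,\mathbb E[L_{\mathrm Df}(\boldsymbol\xi)]);B(\mathcal D(\psi))\big),$$ then $\mathbb E[\Psi(u_N)]\le\mathbb E[\hat\Psi_N(u_N)]+\varepsilon$.
   Context: Let $U$ be a separable Hilbert space (identified with its dual, inner product $(\cdot,\cdot)_U$), $W$ a separable Banach space with dual $W^*$, and $B:U\to W$ a compact linear operator with adjoint $B^*$. Let $\psi:U\to[0,\infty]$ be proper, closed and convex with bounded domain $\mathcal D(\psi)=\{u:\psi(u)<\infty\}$, whose diameter is $r_{\mathrm{ad}}$. Let $U_0\subset U$ be open, convex and bounded with $\mathcal D(\psi)\subset U_0$. Let $\Xi$ be a complete separable metric space, $\boldsymbol\xi$ a $\Xi$-valued random element, and $\boldsymbol\xi^1,\boldsymbol\xi^2,\ldots$ i.i.d. copies of $\boldsymbol\xi$ on a complete probability space $(\Omega,\mathcal F,P)$. Let $f:B(U_0)\times\Xi\to\mathbb R$ be such that $f(\cdot,\xi)$ is continuous on $B(\mathcal D(\psi))$, $f(w,\cdot)$ is measurable, and $|f(Bu,\xi)|\le \zeta_f(\xi)$ on $U_0\times\Xi$ with $\zeta_f$ integrable. Assume: for each $\xi$, $g_\xi(u)=f(Bu,\xi)$ is continuously differentiable on $U_0$;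 there is a Carathéodory map $\mathrm D_wf:B(\mathcal D(\psi))\times\Xi\to W^*$ with $\nabla g_\xi(u)=B^*\mathrm D_wf(Bu,\xi)$ on $\mathcal D(\psi)\times\Xi$; there is an integrable $\zeta_{\mathrm Df}$ with $\|\nabla g_\xi(u)\|_U\le\zeta_{\mathrm Df}(\xi)$ on $U_0\times\Xi$ and $\|\mathrm D_wf(Bu,\xi)\|_{W^*}\le\zeta_{\mathrm Df}(\xi)$ on $\mathcal D(\psi)\times\Xi$. Moreover: there is an integrable $L_{\mathrm Df}:\Xi\to[0,\infty)$ with $\|\nabla g_\xi(u_2)-\nabla g_\xi(u_1)\|_U\le L_{\mathrm Df}(\xi)\|Bu_2-Bu_1\|_W$ for all $u_1,u_2\in\mathcal D(\psi)$, $\xi\in\Xi$; and there is $\tau_{\mathrm Df}>0$ with $\mathbb E[\exp(\tau_{\mathrm Df}^{-2}\|\nabla g_{\boldsymbol\xi}(u)-\mathbb E[\nabla g_{\boldsymbol\xi}(u)]\|_U^2)]\le e$ for all $u\in\mathcal D(\psi)$. Define $\mathrm DF(w)=\mathbb E[\mathrm D_wf(w,\boldsymbol\xi)]$, $\mathrm D\hat F_N(w)=\frac1N\sum_{i=1}^N\mathrm D_wf(w,\boldsymbol\xi^i)$, and on $\mathcal D(\psi)$ the gap functionals $\Psi(u)=\sup_{v\in\mathcal D(\psi)}[(B^*\mathrm DF(Bu),u-v)_U+\psi(u)-\psi(v)]$ and $\hat\Psi_N(u)=\sup_{v\in\mathcal D(\psi)}[(B^*\mathrm D\hat F_N(Bu),u-v)_U+\psi(u)-\psi(v)]$.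 $\mathcal N(\nu;B(\mathcal D(\psi)))$ is the minimal number of points in a $\nu$-net (in $\|\cdot\|_W$) of $B(\mathcal D(\psi))$. *)

theory Defs
  imports "HOL-Probability.Probability"
begin

definition edom :: "('u \<Rightarrow> ereal) \<Rightarrow> 'u set" where
  "edom \<psi> = {u. \<psi> u < \<infinity>}"

definition proper_closed_convex :: "('u::real_normed_vector \<Rightarrow> ereal) \<Rightarrow> bool" where
  "proper_closed_convex \<psi> \<longleftrightarrow>
     edom \<psi> \<noteq> {} \<and> (\<forall>u. \<psi> u > -\<infinity>) \<and>
     closed {(u, t::real). \<psi> u \<le> ereal t} \<and>
     convex {(u, t::real). \<psi> u \<le> ereal t}"

definition compact_operator :: "('u::real_normed_vector \<Rightarrow> 'w::real_normed_vector) \<Rightarrow> bool" where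
  "compact_operator B \<longleftrightarrow> bounded_linear B \<and> compact (closure (B ` cball 0 1))"

definition adj :: "('u::real_inner \<Rightarrow> 'w::real_normed_vector) \<Rightarrow> ('w \<Rightarrow>\<^sub>L real) \<Rightarrow> 'u" where
  "adj B \<phi> = (THE z. \<forall>x. inner z x = blinfun_apply \<phi> (B x))"

definition covering_number :: "ereal \<Rightarrow> 'w::metric_space set \<Rightarrow> nat" where
  "covering_number \<nu> S = (LEAST n. \<exists>C. finite C \<and> C \<subseteq> S \<and> card C = n \<and>
                                      (\<forall>s\<in>S. \<exists>c\<in>C. ereal (dist s c) \<le> \<nu>))"

text \<open>DF(w) = E[D_w f(w,\<xi>)], the expectation taken (weakly) in W*.\<close>
definition DF :: "'a measure \<Rightarrow> ('a \<Rightarrow> 'x) \<Rightarrow> ('w::real_normed_vector \<Rightarrow> 'x \<Rightarrow> ('w \<Rightarrow>\<^sub>L real))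
                   \<Rightarrow> 'w \<Rightarrow> ('w \<Rightarrow>\<^sub>L real)" where
  "DF M \<xi> Dwf w = Blinfun (\<lambda>y. integral\<^sup>L M (\<lambda>\<omega>. blinfun_apply (Dwf w (\<xi> \<omega>)) y))"

definition DFhat :: "(nat \<Rightarrow> 'a \<Rightarrow> 'x) \<Rightarrow> ('w::real_normed_vector \<Rightarrow> 'x \<Rightarrow> ('w \<Rightarrow>\<^sub>L real))
                   \<Rightarrow> nat \<Rightarrow> 'a \<Rightarrow> 'w \<Rightarrow> ('w \<Rightarrow>\<^sub>L real)" where
  "DFhat Xs Dwf N \<omega> w = (1 / real N) *\<^sub>R (\<Sum>i\<in>{1..N}. Dwf w (Xs i \<omega>))"

definition gap :: "('u::real_inner \<Rightarrow> ereal) \<Rightarrow> ('u \<Rightarrow> 'w::real_normed_vector) \<Rightarrow> ('w \<Rightarrow>\<^sub>L real) \<Rightarrow> 'u \<Rightarrow> real" where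
  "gap \<psi> B G u = (SUP v\<in>edom \<psi>. inner (adj B G) (u - v) + real_of_ereal (\<psi> u) - real_of_ereal (\<psi> v))"

end

theory Submission
  imports Defs
begin

lemma riesz_aux_var:
  fixes a b c n :: real
  assumes c: "c > 0" and n: "n \<ge> 0"
    and H: "\<And>t. c + t * a \<ge> 0 \<Longrightarrow> (c + t * a)\<^sup>2 \<le> c\<^sup>2 * (1 + 2 * t * b + t\<^sup>2 * n)"
  shows "a = c * b"
proof (rule ccontr)
  assume ne: "a \<noteq> c * b"
  define e where "e = a - c * b"
  have e0: "\<bar>e\<bar> > 0" using ne e_def by auto
  define s where "s = min (c / (\<bar>a\<bar> + 1)) (\<bar>e\<bar> / (c * n + 1))"
  have cn: "c * n + 1 > 0" using c n by (simp add: add_nonneg_pos)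
  have s0: "s > 0" using c n e0 cn by (auto simp: s_def)
  define t where "t = (if e > 0 then s else - s)"
  have ta: "\<bar>t * a\<bar> \<le> c"
  proof -
    have "\<bar>t * a\<bar> = s * \<bar>a\<bar>" using s0 by (auto simp: t_def abs_mult)
    also have "\<dots> \<le> c / (\<bar>a\<bar> + 1) * \<bar>a\<bar>" using s0 by (intro mult_right_mono) (auto simp: s_def)
    also have "\<dots> \<le> c" using c by (simp add: field_simps)
    finally show ?thesis .
  qed
  have "c + t * a \<ge> 0" using ta by linarith
  from H[OF this] have "2 * t * c * e \<le> t\<^sup>2 * (c\<^sup>2 * n - a\<^sup>2)"
    by (simp add: e_def power2_eq_square algebra_simps)
  also have "\<dots> \<le> t\<^sup>2 * (c\<^sup>2 * n)" by (intro mult_left_mono) auto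
  also have "t\<^sup>2 * (c\<^sup>2 * n) = s\<^sup>2 * (c\<^sup>2 * n)" by (simp add: t_def)
  finally have 1: "2 * t * c * e \<le> s\<^sup>2 * (c\<^sup>2 * n)" .
  have te: "t * e = s * \<bar>e\<bar>" by (auto simp: t_def)
  have "2 * s * c * \<bar>e\<bar> = 2 * c * (t * e)" unfolding te by (simp add: algebra_simps)
  also have "\<dots> = 2 * t * c * e" by (simp add: algebra_simps)
  finally have eq2: "2 * s * c * \<bar>e\<bar> = 2 * t * c * e" .
  have 2: "2 * s * c * \<bar>e\<bar> \<le> s\<^sup>2 * (c\<^sup>2 * n)" using 1 eq2 by linarith
  have e1: "2 * s * c * \<bar>e\<bar> = s * (2 * c * \<bar>e\<bar>)" by (simp add: algebra_simps)
  have e2: "s\<^sup>2 * (c\<^sup>2 * n) = s * (s * (c\<^sup>2 * n))" by (simp add: power2_eq_square algebra_simps)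
  have "s * (2 * c * \<bar>e\<bar>) \<le> s * (s * (c\<^sup>2 * n))" using 2 e1 e2 by linarith
  then have "2 * c * \<bar>e\<bar> \<le> s * (c\<^sup>2 * n)" using s0 by (rule mult_left_le_imp_le)
  also have "\<dots> \<le> \<bar>e\<bar> / (c * n + 1) * (c\<^sup>2 * n)"
    using c n by (intro mult_right_mono) (auto simp: s_def)
  also have "\<dots> = c * \<bar>e\<bar> * (c * n / (c * n + 1))" using cn by (simp add: field_simps power2_eq_square)
  also have "\<dots> \<le> c * \<bar>e\<bar> * 1" using cn c e0 by (intro mult_left_mono) auto
  finally have fin: "2 * c * \<bar>e\<bar> \<le> c * \<bar>e\<bar> * 1" .
  have p: "0 < c * \<bar>e\<bar>" using c e0 by simp
  have "2 * c * \<bar>e\<bar> = 2 * (c * \<bar>e\<bar>)" by simp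
  then show False using fin p by linarith
qed

lemma riesz:
  fixes \<phi> :: "'u::{real_inner,banach} \<Rightarrow> real"
  assumes lin: "bounded_linear \<phi>"
  shows "\<exists>z. \<forall>x. inner z x = \<phi> x"
proof (cases "\<forall>x. \<phi> x = 0")
  case True then show ?thesis by (intro exI[of _ 0]) auto
next
  case False
  then obtain x0 where x0: "\<phi> x0 \<noteq> 0" by auto
  interpret bl: bounded_linear \<phi> by fact
  obtain K where K: "\<And>x. norm (\<phi> x) \<le> norm x * K" and Kp: "K > 0" using bl.pos_bounded by blast
  define c where "c = Sup (\<phi> ` cball 0 1)"
  have bdd: "bdd_above (\<phi> ` cball 0 1)"
  proof (rule bdd_aboveI2)
    fix x :: 'u assume "x \<in> cball 0 1"
    then have "norm x \<le> 1" by simp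
    have "\<phi> x \<le> norm (\<phi> x)" by simp
    also have "\<dots> \<le> norm x * K" by (rule K)
    also have "\<dots> \<le> K" using \<open>norm x \<le> 1\<close> Kp by (simp add: mult_left_le_one_le)
    finally show "\<phi> x \<le> K" .
  qed
  have le_c: "\<phi> x \<le> c" if "norm x \<le> 1" for x
    unfolding c_def using that bdd by (intro cSup_upper) auto
  have bound: "\<phi> x \<le> c * norm x" for x
  proof (cases "x = 0")
    case True then show ?thesis by (simp add: bl.zero)
  next
    case False
    then have "\<phi> (x /\<^sub>R norm x) \<le> c" by (intro le_c) simp
    then show ?thesis using False by (simp add: bl.scaleR field_simps)
  qed
  define y0 where "y0 = (if \<phi> x0 > 0 then x0 else - x0) /\<^sub>R norm x0"
  have "\<phi> y0 > 0" using x0 by (auto simp: y0_def bl.scaleR bl.neg divide_simps)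
  moreover have "norm y0 \<le> 1"
  proof -
    have "x0 \<noteq> 0" using x0 bl.zero by auto
    then show ?thesis by (auto simp: y0_def)
  qed
  ultimately have c0: "c > 0" using le_c[of y0] by linarith
  have approx: "\<exists>x. norm x \<le> 1 \<and> c - 1 / (real n + 1) < \<phi> x" for n :: nat
  proof -
    have "c - 1 / (real n + 1) < c" by simp
    then obtain y where "y \<in> \<phi> ` cball 0 1" "c - 1 / (real n + 1) < y"
      unfolding c_def using bdd by (subst (asm) less_cSup_iff) auto
    then show ?thesis by auto
  qed
  then obtain xs where xs1: "\<And>n. norm (xs n) \<le> 1" and xs2: "\<And>n. c - 1 / (real n + 1) < \<phi> (xs n)"
    by metis
  define d where "d n = 1 / (real n + 1)" for n :: nat
  have key: "(norm (xs n - xs m))\<^sup>2 \<le> 4 * (d n + d m) / c" for n m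
  proof -
    have par: "(norm (xs n - xs m))\<^sup>2 + (norm (xs n + xs m))\<^sup>2 = 2 * (norm (xs n))\<^sup>2 + 2 * (norm (xs m))\<^sup>2"
      by (simp add: power2_norm_eq_inner inner_add_left inner_add_right inner_diff_left inner_diff_right inner_commute)
    have nn: "(norm (xs n))\<^sup>2 \<le> 1" "(norm (xs m))\<^sup>2 \<le> 1"
      using xs1 by (simp_all add: power_le_one norm_ge_zero)
    have s: "2 * c - (d n + d m) < \<phi> (xs n + xs m)"
      using xs2[of n] xs2[of m] by (simp add: bl.add d_def)
    have sb: "\<phi> (xs n + xs m) \<le> c * norm (xs n + xs m)" by (rule bound)
    define D where "D = d n + d m"
    define y where "y = (norm (xs n + xs m))\<^sup>2"
    have y0: "y \<ge> 0" by (simp add: y_def)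
    show ?thesis unfolding D_def[symmetric]
    proof (cases "2 * c - D \<ge> 0")
      case True
      have "(2 * c - D)\<^sup>2 \<le> (c * norm (xs n + xs m))\<^sup>2"
        using True s sb by (intro power_mono) (auto simp: D_def)
      also have "\<dots> = c\<^sup>2 * y" by (simp add: power_mult_distrib y_def)
      finally have a1: "(2 * c - D)\<^sup>2 \<le> c\<^sup>2 * y" .
      have a2: "(2 * c - D)\<^sup>2 = 4 * c\<^sup>2 - 4 * c * D + D\<^sup>2" by (simp add: power2_eq_square algebra_simps)
      have a3: "D\<^sup>2 \<ge> 0" by simp
      have "c * (4 * c - 4 * D) = 4 * c\<^sup>2 - 4 * c * D" by (simp add: power2_eq_square algebra_simps)
      moreover have "c * (c * y) = c\<^sup>2 * y" by (simp add: power2_eq_square)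
      ultimately have "c * (4 * c - 4 * D) \<le> c * (c * y)" using a1 a2 a3 by linarith
      then have a4: "4 * c - 4 * D \<le> c * y" using c0 by (rule mult_left_le_imp_le)
      have "4 - 4 * D / c = (4 * c - 4 * D) / c" using c0 by (simp add: field_simps)
      also have "\<dots> \<le> y" using a4 c0 by (simp add: pos_divide_le_eq mult.commute)
      finally have "y \<ge> 4 - 4 * D / c" .
      then show "(norm (xs n - xs m))\<^sup>2 \<le> 4 * D / c" using par nn unfolding y_def by linarith
    next
      case False
      then have "4 * D / c \<ge> 8" using c0 by (simp add: field_simps)
      moreover have "(norm (xs n - xs m))\<^sup>2 \<le> 4"
        using par nn y0 unfolding y_def by linarith
      ultimately show "(norm (xs n - xs m))\<^sup>2 \<le> 4 * D / c" by linarith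
    qed
  qed
  have "Cauchy xs"
  proof (rule metric_CauchyI)
    fix e :: real assume e: "e > 0"
    obtain M :: nat where M: "real M > 8 / (c * e\<^sup>2)" using reals_Archimedean2 by blast
    show "\<exists>M. \<forall>m\<ge>M. \<forall>n\<ge>M. dist (xs m) (xs n) < e"
    proof (intro exI allI impI)
      fix m n assume mn: "m \<ge> M" "n \<ge> M"
      have dM: "d k \<le> 1 / (real M + 1)" if "k \<ge> M" for k
        using that by (simp add: d_def frac_le)
      have "(dist (xs m) (xs n))\<^sup>2 \<le> 4 * (d m + d n) / c" unfolding dist_norm by (rule key)
      also have "\<dots> \<le> 8 / (real M + 1) / c" using dM[OF mn(1)] dM[OF mn(2)] c0
      proof (intro divide_right_mono)
        have aux: "4 * (a + b) \<le> 8 * q" if "a \<le> q" "b \<le> q" for a b q :: real using that by (simp add: algebra_simps)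
        show "4 * (d m + d n) \<le> 8 / (real M + 1)" using aux[OF dM[OF mn(1)] dM[OF mn(2)]] by simp
      qed (use c0 in simp)
      also have "\<dots> < e\<^sup>2"
      proof -
        have "8 / (c * e\<^sup>2) < real M + 1" using M by linarith
        then have X: "8 < (real M + 1) * (c * e\<^sup>2)" using c0 e by (simp add: field_simps)
        have pos: "(real M + 1) * c > 0" using c0 by simp
        have eqac: "e\<^sup>2 * ((real M + 1) * c) = (real M + 1) * (c * e\<^sup>2)" by (simp add: ac_simps)
        have "8 / ((real M + 1) * c) < e\<^sup>2" unfolding pos_divide_less_eq[OF pos] using X eqac by linarith
        then show ?thesis by simp
      qed
      finally have "(dist (xs m) (xs n))\<^sup>2 < e\<^sup>2" .
      then show "dist (xs m) (xs n) < e" using power_less_imp_less_base[of "dist (xs m) (xs n)" 2 e] e by simp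
    qed
  qed
  then obtain xst where lim: "xs \<longlonglongrightarrow> xst" using Cauchy_convergent_iff convergent_def by blast
  have nx: "norm xst \<le> 1"
    using Lim_bounded[OF tendsto_norm[OF lim], of 0 1] xs1 by blast
  have "(\<lambda>n. \<phi> (xs n)) \<longlonglongrightarrow> \<phi> xst" using lim bl.tendsto by blast
  moreover have "(\<lambda>n. c - 1 / (real n + 1)) \<longlonglongrightarrow> c - 0"
  proof -
    have L0: "(\<lambda>n. 1 / (1 + real n)) \<longlonglongrightarrow> 0" using LIMSEQ_inverse_real_of_nat by (simp add: inverse_eq_divide)
    show ?thesis using tendsto_diff[OF tendsto_const[of c] L0] by (simp add: add.commute)
  qed
  moreover have "\<exists>N. \<forall>n\<ge>N. c - 1 / (real n + 1) \<le> \<phi> (xs n)" using xs2 less_imp_le by blast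
  ultimately have "c - 0 \<le> \<phi> xst" by (intro LIMSEQ_le[of "\<lambda>n. c - 1 / (real n + 1)" _ "\<lambda>n. \<phi> (xs n)"])
  then have "c \<le> \<phi> xst" by simp
  moreover have "\<phi> xst \<le> c" using le_c nx by auto
  ultimately have phx: "\<phi> xst = c" by simp
  have nx1: "norm xst = 1"
  proof -
    have "1 \<le> norm xst" using bound[of xst] phx c0 by (simp add: mult_le_cancel_left1)
    then show ?thesis using nx by simp
  qed
  have "\<phi> y = c * inner xst y" for y
  proof (rule riesz_aux_var[OF c0, of "(norm y)\<^sup>2"])
    fix t :: real assume t: "c + t * \<phi> y \<ge> 0"
    have "c + t * \<phi> y = \<phi> (xst + t *\<^sub>R y)" by (simp add: bl.add bl.scaleR phx)
    also have "\<dots> \<le> c * norm (xst + t *\<^sub>R y)" by (rule bound)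
    finally have "(c + t * \<phi> y)\<^sup>2 \<le> (c * norm (xst + t *\<^sub>R y))\<^sup>2" using t by (intro power_mono) auto
    also have "\<dots> = c\<^sup>2 * (norm (xst + t *\<^sub>R y))\<^sup>2" by (simp add: power_mult_distrib)
    also have "(norm (xst + t *\<^sub>R y))\<^sup>2 = 1 + 2 * t * inner xst y + t\<^sup>2 * (norm y)\<^sup>2"
    proof -
      have i1: "inner xst xst = 1" using nx1 by (simp add: norm_eq_sqrt_inner)
      have i2: "inner y y = (norm y)\<^sup>2" by (simp add: power2_norm_eq_inner)
      have "(norm (xst + t *\<^sub>R y))\<^sup>2 = inner (xst + t *\<^sub>R y) (xst + t *\<^sub>R y)" by (rule power2_norm_eq_inner)
      also have "\<dots> = inner xst xst + 2 * t * inner xst y + t\<^sup>2 * inner y y"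
        by (simp add: inner_add_left inner_add_right inner_commute power2_eq_square)
      finally show ?thesis using i1 i2 by simp
    qed
    finally show "(c + t * \<phi> y)\<^sup>2 \<le> c\<^sup>2 * (1 + 2 * t * inner xst y + t\<^sup>2 * (norm y)\<^sup>2)" .
  qed simp
  then show ?thesis by (intro exI[of _ "c *\<^sub>R xst"]) simp
qed

lemma indep_pair:
  assumes prob: "prob_space M"
    and ind: "prob_space.indep_vars M (\<lambda>_. borel) Xs {1..}"
    and ij: "i \<ge> 1" "j \<ge> (1::nat)" "i \<noteq> j"
  shows "prob_space.indep_var M borel (Xs i) borel (Xs j)"
proof -
  interpret prob_space M by fact
  have "indep_var (PiM {i} (\<lambda>_. borel)) (\<lambda>\<omega>. restrict (\<lambda>i. Xs i \<omega>) {i})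
                  (PiM {j} (\<lambda>_. borel)) (\<lambda>\<omega>. restrict (\<lambda>i. Xs i \<omega>) {j})"
    using ij by (intro indep_var_restrict[OF ind]) auto
  then have "indep_var borel ((\<lambda>f. f i) \<circ> (\<lambda>\<omega>. restrict (\<lambda>i. Xs i \<omega>) {i}))
                  borel ((\<lambda>f. f j) \<circ> (\<lambda>\<omega>. restrict (\<lambda>i. Xs i \<omega>) {j}))"
    by (rule indep_var_compose) (auto intro: measurable_component_singleton)
  then show ?thesis by (simp add: comp_def)
qed

lemma inner_abs_le_sq:
  fixes a b :: "'u::real_inner"
  shows "\<bar>inner a b\<bar> \<le> ((norm a)\<^sup>2 + (norm b)\<^sup>2) / 2"
proof -
  have "\<bar>inner a b\<bar> \<le> norm a * norm b" by (rule Cauchy_Schwarz_ineq2)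
  also have "\<dots> \<le> ((norm a)\<^sup>2 + (norm b)\<^sup>2) / 2"
    using sum_squares_bound[of "norm a" "norm b"] by (simp add: power2_eq_square field_simps)
  finally show ?thesis .
qed

lemma cross_zero:
  fixes \<phi> :: "'x::topological_space \<Rightarrow> 'u::{real_inner, banach, second_countable_topology}"
  assumes prob: "prob_space M"
    and X: "X \<in> M \<rightarrow>\<^sub>M borel" and Y: "Y \<in> M \<rightarrow>\<^sub>M borel"
    and ind: "prob_space.indep_var M borel X borel Y"
    and dX: "distr M borel X = P" and dY: "distr M borel Y = P"
    and phm: "\<phi> \<in> borel_measurable borel"
    and int: "integrable P \<phi>" and int0: "integral\<^sup>L P \<phi> = 0"
    and sq: "integrable P (\<lambda>x. (norm (\<phi> x))\<^sup>2)"
  shows "integrable M (\<lambda>\<omega>. inner (\<phi> (X \<omega>)) (\<phi> (Y \<omega>)))"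
    and "integral\<^sup>L M (\<lambda>\<omega>. inner (\<phi> (X \<omega>)) (\<phi> (Y \<omega>))) = 0"
proof -
  interpret prob_space M by fact
  interpret P: prob_space P using prob_space_distr[OF X] dX by simp
  interpret PP: pair_prob_space P P ..
  have [measurable]: "\<phi> \<in> borel_measurable borel" by fact
  have [measurable]: "X \<in> M \<rightarrow>\<^sub>M borel" "Y \<in> M \<rightarrow>\<^sub>M borel" using X Y by auto
  have sqX: "integrable M (\<lambda>\<omega>. (norm (\<phi> (X \<omega>)))\<^sup>2)"
    using sq integrable_distr_eq[of X M borel "\<lambda>x. (norm (\<phi> x))\<^sup>2"] dX by simp
  have sqY: "integrable M (\<lambda>\<omega>. (norm (\<phi> (Y \<omega>)))\<^sup>2)"
    using sq integrable_distr_eq[of Y M borel "\<lambda>x. (norm (\<phi> x))\<^sup>2"] dY by simp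
  show intM: "integrable M (\<lambda>\<omega>. inner (\<phi> (X \<omega>)) (\<phi> (Y \<omega>)))"
    by (rule Bochner_Integration.integrable_bound[where f="\<lambda>\<omega>. ((norm (\<phi> (X \<omega>)))\<^sup>2 + (norm (\<phi> (Y \<omega>)))\<^sup>2) / 2"])
       (use sqX sqY inner_abs_le_sq in auto)
  define h where "h = (\<lambda>z::'x\<times>'x. inner (\<phi> (fst z)) (\<phi> (snd z)))"
  have hm[measurable]: "h \<in> borel_measurable (borel \<Otimes>\<^sub>M borel)" unfolding h_def by measurable
  have pm[measurable]: "(\<lambda>\<omega>. (X \<omega>, Y \<omega>)) \<in> M \<rightarrow>\<^sub>M (borel \<Otimes>\<^sub>M borel)" by measurable
  have de: "distr M (borel \<Otimes>\<^sub>M borel) (\<lambda>\<omega>. (X \<omega>, Y \<omega>)) = P \<Otimes>\<^sub>M P"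
    using ind unfolding indep_var_distribution_eq dX dY by simp
  have "integrable (distr M (borel \<Otimes>\<^sub>M borel) (\<lambda>\<omega>. (X \<omega>, Y \<omega>))) h"
    using intM by (subst integrable_distr_eq) (auto simp: h_def)
  then have intPP: "integrable (P \<Otimes>\<^sub>M P) h" using de by simp
  have "integral\<^sup>L M (\<lambda>\<omega>. inner (\<phi> (X \<omega>)) (\<phi> (Y \<omega>))) = integral\<^sup>L (distr M (borel \<Otimes>\<^sub>M borel) (\<lambda>\<omega>. (X \<omega>, Y \<omega>))) h"
    by (subst integral_distr) (auto simp: h_def)
  also have "\<dots> = integral\<^sup>L (P \<Otimes>\<^sub>M P) h" using de by simp
  also have "\<dots> = (\<integral>x. (\<integral>y. h (x, y) \<partial>P) \<partial>P)" using PP.integral_fst'[OF intPP] by simp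
  also have "\<dots> = 0" using int int0 by (simp add: h_def)
  finally show "integral\<^sup>L M (\<lambda>\<omega>. inner (\<phi> (X \<omega>)) (\<phi> (Y \<omega>))) = 0" .
qed

lemma var_mean:
  fixes \<phi> :: "'x::topological_space \<Rightarrow> 'u::{real_inner, banach, second_countable_topology}"
  assumes prob: "prob_space M"
    and Xs: "\<And>i. i \<ge> 1 \<Longrightarrow> Xs i \<in> M \<rightarrow>\<^sub>M borel"
    and ind: "prob_space.indep_vars M (\<lambda>_. borel) Xs {1..}"
    and dX: "\<And>i. i \<ge> 1 \<Longrightarrow> distr M borel (Xs i) = P"
    and phm: "\<phi> \<in> borel_measurable borel"
    and int: "integrable P \<phi>" and int0: "integral\<^sup>L P \<phi> = 0"
    and sq: "integrable P (\<lambda>x. (norm (\<phi> x))\<^sup>2)" and sqb: "integral\<^sup>L P (\<lambda>x. (norm (\<phi> x))\<^sup>2) \<le> T"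
    and N: "N \<ge> (1::nat)"
  shows "integrable M (\<lambda>\<omega>. (norm ((1 / real N) *\<^sub>R (\<Sum>i\<in>{1..N}. \<phi> (Xs i \<omega>))))\<^sup>2)"
    and "integral\<^sup>L M (\<lambda>\<omega>. (norm ((1 / real N) *\<^sub>R (\<Sum>i\<in>{1..N}. \<phi> (Xs i \<omega>))))\<^sup>2) \<le> T / real N"
proof -
  interpret prob_space M by fact
  have [measurable]: "\<phi> \<in> borel_measurable borel" by fact
  have pint: "integrable M (\<lambda>\<omega>. inner (\<phi> (Xs i \<omega>)) (\<phi> (Xs j \<omega>)))"
    and pval: "integral\<^sup>L M (\<lambda>\<omega>. inner (\<phi> (Xs i \<omega>)) (\<phi> (Xs j \<omega>))) = (if i = j then integral\<^sup>L P (\<lambda>x. (norm (\<phi> x))\<^sup>2) else 0)"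
    if ij: "i \<in> {1..N}" "j \<in> {1..N}" for i j
  proof -
    have i1: "i \<ge> 1" and j1: "j \<ge> 1" using ij by auto
    have [measurable]: "Xs i \<in> M \<rightarrow>\<^sub>M borel" "Xs j \<in> M \<rightarrow>\<^sub>M borel" using Xs i1 j1 by auto
    have "integrable M (\<lambda>\<omega>. inner (\<phi> (Xs i \<omega>)) (\<phi> (Xs j \<omega>))) \<and>
          integral\<^sup>L M (\<lambda>\<omega>. inner (\<phi> (Xs i \<omega>)) (\<phi> (Xs j \<omega>))) = (if i = j then integral\<^sup>L P (\<lambda>x. (norm (\<phi> x))\<^sup>2) else 0)"
    proof (cases "i = j")
      case True
      have "integrable M (\<lambda>\<omega>. (norm (\<phi> (Xs i \<omega>)))\<^sup>2)"
        using sq integrable_distr_eq[of "Xs i" M borel "\<lambda>x. (norm (\<phi> x))\<^sup>2"] dX[OF i1] by simp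
      moreover have "integral\<^sup>L M (\<lambda>\<omega>. (norm (\<phi> (Xs i \<omega>)))\<^sup>2) = integral\<^sup>L P (\<lambda>x. (norm (\<phi> x))\<^sup>2)"
        using integral_distr[of "Xs i" M borel "\<lambda>x. (norm (\<phi> x))\<^sup>2"] dX[OF i1] by simp
      ultimately show ?thesis using True by (simp add: power2_norm_eq_inner)
    next
      case False
      have ii: "prob_space.indep_var M borel (Xs i) borel (Xs j)"
        using indep_pair[OF prob ind i1 j1 False] .
      show ?thesis using cross_zero[OF prob _ _ ii dX[OF i1] dX[OF j1] phm int int0 sq] False by simp
    qed
    then show "integrable M (\<lambda>\<omega>. inner (\<phi> (Xs i \<omega>)) (\<phi> (Xs j \<omega>)))"
      "integral\<^sup>L M (\<lambda>\<omega>. inner (\<phi> (Xs i \<omega>)) (\<phi> (Xs j \<omega>))) = (if i = j then integral\<^sup>L P (\<lambda>x. (norm (\<phi> x))\<^sup>2) else 0)"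
      by auto
  qed
  have eq: "(norm ((1 / real N) *\<^sub>R (\<Sum>i\<in>{1..N}. \<phi> (Xs i \<omega>))))\<^sup>2
      = (1 / real N)\<^sup>2 * (\<Sum>i\<in>{1..N}. \<Sum>j\<in>{1..N}. inner (\<phi> (Xs i \<omega>)) (\<phi> (Xs j \<omega>)))" for \<omega>
  proof -
    let ?S = "\<Sum>i\<in>{1..N}. \<phi> (Xs i \<omega>)"
    have "(norm ((1 / real N) *\<^sub>R ?S))\<^sup>2 = inner ((1 / real N) *\<^sub>R ?S) ((1 / real N) *\<^sub>R ?S)"
      by (rule power2_norm_eq_inner)
    also have "\<dots> = (1 / real N)\<^sup>2 * inner ?S ?S" by (simp add: power2_eq_square)
    also have "inner ?S ?S = (\<Sum>i\<in>{1..N}. \<Sum>j\<in>{1..N}. inner (\<phi> (Xs i \<omega>)) (\<phi> (Xs j \<omega>)))"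
      by (simp add: inner_sum_left inner_sum_right inner_commute)
    finally show ?thesis .
  qed
  show "integrable M (\<lambda>\<omega>. (norm ((1 / real N) *\<^sub>R (\<Sum>i\<in>{1..N}. \<phi> (Xs i \<omega>))))\<^sup>2)"
    unfolding eq using pint by (intro integrable_mult_right Bochner_Integration.integrable_sum) auto
  have "integral\<^sup>L M (\<lambda>\<omega>. (norm ((1 / real N) *\<^sub>R (\<Sum>i\<in>{1..N}. \<phi> (Xs i \<omega>))))\<^sup>2)
      = (1 / real N)\<^sup>2 * (\<Sum>i\<in>{1..N}. \<Sum>j\<in>{1..N}. integral\<^sup>L M (\<lambda>\<omega>. inner (\<phi> (Xs i \<omega>)) (\<phi> (Xs j \<omega>))))"
  proof -
    have s1: "integral\<^sup>L M (\<lambda>\<omega>. \<Sum>j\<in>{1..N}. inner (\<phi> (Xs i \<omega>)) (\<phi> (Xs j \<omega>)))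
       = (\<Sum>j\<in>{1..N}. integral\<^sup>L M (\<lambda>\<omega>. inner (\<phi> (Xs i \<omega>)) (\<phi> (Xs j \<omega>))))" if "i \<in> {1..N}" for i
      by (rule Bochner_Integration.integral_sum) (use pint that in auto)
    have "integral\<^sup>L M (\<lambda>\<omega>. \<Sum>i\<in>{1..N}. \<Sum>j\<in>{1..N}. inner (\<phi> (Xs i \<omega>)) (\<phi> (Xs j \<omega>)))
       = (\<Sum>i\<in>{1..N}. integral\<^sup>L M (\<lambda>\<omega>. \<Sum>j\<in>{1..N}. inner (\<phi> (Xs i \<omega>)) (\<phi> (Xs j \<omega>))))"
      by (rule Bochner_Integration.integral_sum) (use pint in \<open>auto intro!: Bochner_Integration.integrable_sum\<close>)
    also have "\<dots> = (\<Sum>i\<in>{1..N}. \<Sum>j\<in>{1..N}. integral\<^sup>L M (\<lambda>\<omega>. inner (\<phi> (Xs i \<omega>)) (\<phi> (Xs j \<omega>))))"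
      using s1 by (rule sum.cong[OF refl])
    finally show ?thesis unfolding eq by simp
  qed
  also have "\<dots> = (1 / real N)\<^sup>2 * (\<Sum>i\<in>{1..N}. integral\<^sup>L P (\<lambda>x. (norm (\<phi> x))\<^sup>2))"
  proof -
    have s2: "(\<Sum>j\<in>{1..N}. integral\<^sup>L M (\<lambda>\<omega>. inner (\<phi> (Xs i \<omega>)) (\<phi> (Xs j \<omega>))))
        = integral\<^sup>L P (\<lambda>x. (norm (\<phi> x))\<^sup>2)" if i: "i \<in> {1..N}" for i
    proof -
      have "(\<Sum>j\<in>{1..N}. integral\<^sup>L M (\<lambda>\<omega>. inner (\<phi> (Xs i \<omega>)) (\<phi> (Xs j \<omega>))))
          = (\<Sum>j\<in>{1..N}. if i = j then integral\<^sup>L P (\<lambda>x. (norm (\<phi> x))\<^sup>2) else 0)"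
        by (rule sum.cong[OF refl]) (use pval i in auto)
      also have "\<dots> = integral\<^sup>L P (\<lambda>x. (norm (\<phi> x))\<^sup>2)" using i by simp
      finally show ?thesis .
    qed
    have "(\<Sum>i\<in>{1..N}. \<Sum>j\<in>{1..N}. integral\<^sup>L M (\<lambda>\<omega>. inner (\<phi> (Xs i \<omega>)) (\<phi> (Xs j \<omega>))))
        = (\<Sum>i\<in>{1..N}. integral\<^sup>L P (\<lambda>x. (norm (\<phi> x))\<^sup>2))"
      by (rule sum.cong[OF refl]) (rule s2)
    then show ?thesis by simp
  qed
  also have "\<dots> = integral\<^sup>L P (\<lambda>x. (norm (\<phi> x))\<^sup>2) / real N"
    using N by (simp add: power2_eq_square field_simps)
  also have "\<dots> \<le> T / real N" using sqb by (simp add: divide_right_mono)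
  finally show "integral\<^sup>L M (\<lambda>\<omega>. (norm ((1 / real N) *\<^sub>R (\<Sum>i\<in>{1..N}. \<phi> (Xs i \<omega>))))\<^sup>2) \<le> T / real N" .
qed

lemma inner_ext_eq:
  fixes a b :: "'u::real_inner"
  assumes "\<And>x. inner a x = inner b x" shows "a = b"
proof -
  have "inner (a - b) (a - b) = 0" using assms by (simp add: inner_diff_left)
  then show ?thesis by simp
qed

lemma adj_char:
  fixes B :: "'u::{real_inner,banach} \<Rightarrow> 'w::real_normed_vector"
  assumes B: "bounded_linear B"
  shows "inner (adj B \<phi>) x = blinfun_apply \<phi> (B x)"
proof -
  have "bounded_linear (\<lambda>x. blinfun_apply \<phi> (B x))"
    using bounded_linear_compose[OF blinfun.bounded_linear_right B] .
  then obtain z where z: "\<And>x. inner z x = blinfun_apply \<phi> (B x)" using riesz by blast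
  have "adj B \<phi> = z" unfolding adj_def
  proof (rule the_equality)
    show "\<forall>x. inner z x = blinfun_apply \<phi> (B x)" using z by blast
    fix z' assume "\<forall>x. inner z' x = blinfun_apply \<phi> (B x)"
    then show "z' = z" using z by (rule_tac inner_ext_eq) auto
  qed
  then show ?thesis using z by simp
qed

lemma adj_bl:
  fixes B :: "'u::{real_inner,banach} \<Rightarrow> 'w::real_normed_vector"
  assumes B: "bounded_linear B"
  shows "bounded_linear (adj B)"
proof -
  interpret B: bounded_linear B by fact
  obtain K where K: "\<And>x. norm (B x) \<le> norm x * K" and "K > 0" using B.pos_bounded by blast
  show ?thesis
  proof (rule bounded_linear_intro[where K=K])
    fix \<phi> ch show "adj B (\<phi> + ch) = adj B \<phi> + adj B ch"
      by (rule inner_ext_eq) (simp add: adj_char[OF B] inner_add_left blinfun.add_left)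
  next
    fix r \<phi> show "adj B (r *\<^sub>R \<phi>) = r *\<^sub>R adj B \<phi>"
      by (rule inner_ext_eq) (simp add: adj_char[OF B] blinfun.scaleR_left)
  next
    fix \<phi> :: "'w \<Rightarrow>\<^sub>L real"
    let ?z = "adj B \<phi>"
    have "(norm ?z)\<^sup>2 = blinfun_apply \<phi> (B ?z)" by (simp add: power2_norm_eq_inner adj_char[OF B])
    also have "\<dots> \<le> norm (blinfun_apply \<phi> (B ?z))" by simp
    also have "\<dots> \<le> norm \<phi> * norm (B ?z)" by (rule norm_blinfun)
    also have "\<dots> \<le> norm \<phi> * (norm ?z * K)" by (intro mult_left_mono K) simp
    finally have *: "norm ?z * norm ?z \<le> norm ?z * (norm \<phi> * K)" by (simp add: power2_eq_square algebra_simps)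
    show "norm ?z \<le> norm \<phi> * K"
    proof (cases "norm ?z = 0")
      case True then show ?thesis using \<open>K > 0\<close> by simp
    next
      case False then show ?thesis using * by (simp add: mult_le_cancel_left)
    qed
  qed
qed

lemma gap_bdd:
  fixes \<psi> :: "'u::real_inner \<Rightarrow> ereal"
  assumes bdd: "bounded (edom \<psi>)" and nn: "\<And>u. \<psi> u \<ge> 0" and u: "u \<in> edom \<psi>"
  shows "bdd_above ((\<lambda>v. inner p (u - v) + real_of_ereal (\<psi> u) - real_of_ereal (\<psi> v)) ` edom \<psi>)"
proof (rule bdd_aboveI2)
  fix v assume v: "v \<in> edom \<psi>"
  have "inner p (u - v) \<le> norm p * norm (u - v)" by (rule norm_cauchy_schwarz)
  also have "\<dots> \<le> norm p * diameter (edom \<psi>)"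
    using diameter_bounded_bound[OF bdd u v] by (intro mult_left_mono) (auto simp: dist_norm)
  finally show "inner p (u - v) + real_of_ereal (\<psi> u) - real_of_ereal (\<psi> v) \<le> norm p * diameter (edom \<psi>) + real_of_ereal (\<psi> u)"
    using real_of_ereal_pos[OF nn[of v]] by simp
qed

lemma gap_nonneg:
  fixes \<psi> :: "'u::real_inner \<Rightarrow> ereal"
  assumes bdd: "bounded (edom \<psi>)" and nn: "\<And>u. \<psi> u \<ge> 0" and u: "u \<in> edom \<psi>"
  shows "0 \<le> gap \<psi> B G u"
  unfolding gap_def
  by (rule order_trans[OF _ cSUP_upper[OF u gap_bdd[OF bdd nn u]]]) simp

lemma gap_cmp:
  fixes \<psi> :: "'u::real_inner \<Rightarrow> ereal"
  assumes bdd: "bounded (edom \<psi>)" and nn: "\<And>u. \<psi> u \<ge> 0" and u: "u \<in> edom \<psi>"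
  shows "gap \<psi> B G1 u \<le> gap \<psi> B G2 u + diameter (edom \<psi>) * norm (adj B G1 - adj B G2)"
  unfolding gap_def
proof (rule cSUP_least)
  show "edom \<psi> \<noteq> {}" using u by auto
  fix v assume v: "v \<in> edom \<psi>"
  have "inner (adj B G1 - adj B G2) (u - v) \<le> norm (adj B G1 - adj B G2) * norm (u - v)" by (rule norm_cauchy_schwarz)
  also have "\<dots> \<le> norm (adj B G1 - adj B G2) * diameter (edom \<psi>)"
    using diameter_bounded_bound[OF bdd u v] by (intro mult_left_mono) (auto simp: dist_norm)
  finally have 1: "inner (adj B G1) (u - v) \<le> inner (adj B G2) (u - v) + diameter (edom \<psi>) * norm (adj B G1 - adj B G2)"
    by (simp add: inner_diff_left algebra_simps)
  have 2: "inner (adj B G2) (u - v) + real_of_ereal (\<psi> u) - real_of_ereal (\<psi> v)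
      \<le> (SUP v\<in>edom \<psi>. inner (adj B G2) (u - v) + real_of_ereal (\<psi> u) - real_of_ereal (\<psi> v))"
    by (rule cSUP_upper[OF v gap_bdd[OF bdd nn u]])
  show "inner (adj B G1) (u - v) + real_of_ereal (\<psi> u) - real_of_ereal (\<psi> v)
      \<le> (SUP v\<in>edom \<psi>. inner (adj B G2) (u - v) + real_of_ereal (\<psi> u) - real_of_ereal (\<psi> v)) + diameter (edom \<psi>) * norm (adj B G1 - adj B G2)"
    using 1 2 by linarith
qed

definition H0 :: "('u::real_inner \<Rightarrow> ereal) \<Rightarrow> 'u \<Rightarrow> real" where
  "H0 \<psi> p = (SUP v\<in>edom \<psi>. - inner p v - real_of_ereal (\<psi> v))"

lemma H0_bdd:
  fixes \<psi> :: "'u::real_inner \<Rightarrow> ereal"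
  assumes bdd: "bounded (edom \<psi>)" and nn: "\<And>u. \<psi> u \<ge> 0"
  shows "bdd_above ((\<lambda>v. - inner p v - real_of_ereal (\<psi> v)) ` edom \<psi>)"
proof -
  obtain R where R: "\<And>v. v \<in> edom \<psi> \<Longrightarrow> norm v \<le> R" and R0: "R > 0"
    using bdd by (auto simp: bounded_pos)
  show ?thesis
  proof (rule bdd_aboveI2)
    fix v assume v: "v \<in> edom \<psi>"
    have "- inner p v \<le> norm p * norm v" using norm_cauchy_schwarz[of p "-v"] by simp
    also have "\<dots> \<le> norm p * R" using R[OF v] by (intro mult_left_mono) auto
    finally show "- inner p v - real_of_ereal (\<psi> v) \<le> norm p * R"
      using real_of_ereal_pos[OF nn[of v]] by simp
  qed
qed

lemma gap_decomp:
  fixes \<psi> :: "'u::real_inner \<Rightarrow> ereal"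
  assumes bdd: "bounded (edom \<psi>)" and nn: "\<And>u. \<psi> u \<ge> 0" and u: "u \<in> edom \<psi>"
  shows "gap \<psi> B G u = inner (adj B G) u + real_of_ereal (\<psi> u) + H0 \<psi> (adj B G)"
proof -
  note hb = H0_bdd[OF bdd nn]
  let ?p = "adj B G" and ?c = "inner (adj B G) u + real_of_ereal (\<psi> u)"
  have ne: "edom \<psi> \<noteq> {}" using u by auto
  have eq: "inner ?p (u - v) + real_of_ereal (\<psi> u) - real_of_ereal (\<psi> v) = ?c + (- inner ?p v - real_of_ereal (\<psi> v))" for v
    by (simp add: inner_diff_right)
  have "(SUP v\<in>edom \<psi>. ?c + (- inner ?p v - real_of_ereal (\<psi> v))) = ?c + H0 \<psi> ?p"
  proof (rule antisym)
    show "(SUP v\<in>edom \<psi>. ?c + (- inner ?p v - real_of_ereal (\<psi> v))) \<le> ?c + H0 \<psi> ?p"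
    proof (rule cSUP_least[OF ne])
      fix v assume v: "v \<in> edom \<psi>"
      have "- inner ?p v - real_of_ereal (\<psi> v) \<le> H0 \<psi> ?p" unfolding H0_def by (rule cSUP_upper[OF v hb])
      then show "?c + (- inner ?p v - real_of_ereal (\<psi> v)) \<le> ?c + H0 \<psi> ?p" by linarith
    qed
    have "H0 \<psi> ?p \<le> (SUP v\<in>edom \<psi>. ?c + (- inner ?p v - real_of_ereal (\<psi> v))) - ?c"
      unfolding H0_def
    proof (intro cSUP_least ne)
      fix v assume v: "v \<in> edom \<psi>"
      have "bdd_above ((\<lambda>v. ?c + (- inner ?p v - real_of_ereal (\<psi> v))) ` edom \<psi>)"
        using gap_bdd[OF bdd nn u, of ?p] unfolding eq .
      then have "?c + (- inner ?p v - real_of_ereal (\<psi> v)) \<le> (SUP v\<in>edom \<psi>. ?c + (- inner ?p v - real_of_ereal (\<psi> v)))"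
        using v by (intro cSUP_upper)
      then show "- inner ?p v - real_of_ereal (\<psi> v) \<le> (SUP v\<in>edom \<psi>. ?c + (- inner ?p v - real_of_ereal (\<psi> v))) - ?c"
        by linarith
    qed
    then show "?c + H0 \<psi> ?p \<le> (SUP v\<in>edom \<psi>. ?c + (- inner ?p v - real_of_ereal (\<psi> v)))" by linarith
  qed
  then show ?thesis unfolding gap_def eq .
qed

lemma H0_lip:
  fixes \<psi> :: "'u::real_inner \<Rightarrow> ereal"
  assumes bdd: "bounded (edom \<psi>)" and nn: "\<And>u. \<psi> u \<ge> 0" and ne: "edom \<psi> \<noteq> {}"
  shows "continuous_on UNIV (H0 \<psi>)"
proof -
  note hb = H0_bdd[OF bdd nn]
  obtain R where R: "\<And>v. v \<in> edom \<psi> \<Longrightarrow> norm v \<le> R" and R0': "R > 0"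
    using bdd by (auto simp: bounded_pos)
  have R0: "R \<ge> 0" using R0' by simp
  have one: "H0 \<psi> p \<le> H0 \<psi> q + R * norm (p - q)" for p q
  proof -
    have "H0 \<psi> p - R * norm (p - q) \<le> H0 \<psi> q" unfolding H0_def[of \<psi> p]
    proof -
      have "(SUP v\<in>edom \<psi>. - inner p v - real_of_ereal (\<psi> v)) \<le> H0 \<psi> q + R * norm (p - q)"
      proof (rule cSUP_least[OF ne])
        fix v assume v: "v \<in> edom \<psi>"
        have a1: "- inner p v = - inner q v - inner (p - q) v" by (simp add: inner_diff_left)
        have a2: "- inner (p - q) v \<le> norm (p - q) * norm v" using norm_cauchy_schwarz[of "p - q" "-v"] by simp
        have a3: "norm (p - q) * norm v \<le> norm (p - q) * R" using R[OF v] by (intro mult_left_mono) auto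
        have a4: "- inner q v - real_of_ereal (\<psi> v) \<le> H0 \<psi> q" unfolding H0_def by (rule cSUP_upper[OF v hb])
        have a5: "norm (p - q) * R = R * norm (p - q)" by simp
        show "- inner p v - real_of_ereal (\<psi> v) \<le> H0 \<psi> q + R * norm (p - q)" using a1 a2 a3 a4 a5 by linarith
      qed
      then show "(SUP v\<in>edom \<psi>. - inner p v - real_of_ereal (\<psi> v)) - R * norm (p - q) \<le> H0 \<psi> q" by linarith
    qed
    then show ?thesis by linarith
  qed
  have "R-lipschitz_on UNIV (H0 \<psi>)"
  proof (rule lipschitz_onI[OF _ R0])
    fix p q :: 'u
    have "H0 \<psi> p - H0 \<psi> q \<le> R * norm (p - q)" using one[of p q] by simp
    moreover have "H0 \<psi> q - H0 \<psi> p \<le> R * norm (p - q)" using one[of q p] by (simp add: norm_minus_commute)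
    ultimately show "dist (H0 \<psi> p) (H0 \<psi> q) \<le> R * dist p q" by (simp add: dist_norm dist_real_def abs_le_iff)
  qed
  then show ?thesis by (rule lipschitz_on_continuous_on)
qed

lemma psi_meas:
  fixes \<psi> :: "'u::{real_normed_vector, second_countable_topology} \<Rightarrow> ereal"
  assumes "proper_closed_convex \<psi>"
  shows "\<psi> \<in> borel_measurable borel"
proof (rule borel_measurableI_le)
  fix y :: ereal
  have cl: "closed {(u, t::real). \<psi> u \<le> ereal t}" and mi: "\<And>u. \<psi> u > -\<infinity>"
    using assms unfolding proper_closed_convex_def by auto
  show "{x \<in> space borel. \<psi> x \<le> y} \<in> sets borel"
  proof (cases y)
    case (real t)
    have "{x. \<psi> x \<le> y} = (\<lambda>u. (u, t)) -` {(u, t::real). \<psi> u \<le> ereal t}" using real by auto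
    moreover have "closed ((\<lambda>u. (u, t)) -` {(u, t::real). \<psi> u \<le> ereal t})"
      by (rule continuous_closed_vimage[OF cl]) (intro continuous_intros)
    ultimately show ?thesis by simp
  next
    case PInf then show ?thesis by simp
  next
    case MInf
    then have "{x \<in> space borel. \<psi> x \<le> y} = {}" using mi by (auto simp: not_le)
    then show ?thesis by simp
  qed
qed

lemma exp_ge_e_mult: "exp 1 * y \<le> exp (y::real)"
proof -
  have "exp 1 * (1 + (y - 1)) \<le> exp 1 * exp (y - 1)" using exp_ge_add_one_self[of "y - 1"] by (intro mult_left_mono) auto
  also have "\<dots> = exp y" by (simp add: exp_add[symmetric])
  finally show ?thesis by simp
qed

lemma subgauss_sq:
  fixes Z :: "'a \<Rightarrow> real"
  assumes Zm: "Z \<in> borel_measurable M" and Z0: "\<And>\<omega>. 0 \<le> Z \<omega>" and \<tau>: "\<tau> > 0"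
    and nn: "(\<integral>\<^sup>+\<omega>. ennreal (exp (Z \<omega> / \<tau>\<^sup>2)) \<partial>M) \<le> ennreal (exp 1)"
  shows "integrable M Z" "integral\<^sup>L M Z \<le> \<tau>\<^sup>2"
proof -
  have t2: "\<tau>\<^sup>2 > 0" using \<tau> by simp
  define Y where "Y \<omega> = Z \<omega> / \<tau>\<^sup>2" for \<omega>
  have Y0: "0 \<le> Y \<omega>" for \<omega> using Z0[of \<omega>] t2 by (simp add: Y_def)
  have Ym: "Y \<in> borel_measurable M" unfolding Y_def[abs_def] using Zm by (intro borel_measurable_divide) auto
  have "(\<integral>\<^sup>+\<omega>. ennreal (exp 1) * ennreal (Y \<omega>) \<partial>M) = (\<integral>\<^sup>+\<omega>. ennreal (exp 1 * Y \<omega>) \<partial>M)"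
    using Y0 by (simp add: ennreal_mult)
  also have "\<dots> \<le> (\<integral>\<^sup>+\<omega>. ennreal (exp (Z \<omega> / \<tau>\<^sup>2)) \<partial>M)"
    by (intro nn_integral_mono ennreal_leI) (simp add: Y_def exp_ge_e_mult[of "Z _ / \<tau>\<^sup>2", simplified])
  also have "\<dots> \<le> ennreal (exp 1) * 1" using nn by simp
  finally have "ennreal (exp 1) * (\<integral>\<^sup>+\<omega>. ennreal (Y \<omega>) \<partial>M) \<le> ennreal (exp 1) * 1"
    using Ym by (simp add: nn_integral_cmult)
  then have I1: "(\<integral>\<^sup>+\<omega>. ennreal (Y \<omega>) \<partial>M) \<le> 1"
    by (subst (asm) ennreal_mult_le_mult_iff) auto
  have intY: "integrable M Y"
    using I1 Y0 Ym by (intro integrableI_nonneg) (auto simp: le_less_trans[OF I1])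
  have "integral\<^sup>L M Y = enn2real (\<integral>\<^sup>+\<omega>. ennreal (Y \<omega>) \<partial>M)"
    using Ym Y0 by (intro integral_eq_nn_integral) auto
  also have "\<dots> \<le> 1" using I1 by (simp add: enn2real_leI)
  finally have IY: "integral\<^sup>L M Y \<le> 1" .
  have Zeq: "Z = (\<lambda>\<omega>. \<tau>\<^sup>2 * Y \<omega>)" using t2 by (auto simp: Y_def)
  show "integrable M Z" unfolding Zeq using intY by simp
  have "integral\<^sup>L M Z = \<tau>\<^sup>2 * integral\<^sup>L M Y" unfolding Zeq by simp
  also have "\<dots> \<le> \<tau>\<^sup>2 * 1" using IY t2 by (intro mult_left_mono) auto
  finally show "integral\<^sup>L M Z \<le> \<tau>\<^sup>2" by simp
qed

lemma exp_le_sqrt: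
  fixes Q :: "'a \<Rightarrow> real"
  assumes "prob_space M" "integrable M Q" "integrable M (\<lambda>x. (Q x)\<^sup>2)"
  shows "integral\<^sup>L M Q \<le> sqrt (integral\<^sup>L M (\<lambda>x. (Q x)\<^sup>2))"
proof -
  interpret prob_space M by fact
  have "0 \<le> variance Q" by (rule variance_positive)
  then have "(expectation Q)\<^sup>2 \<le> expectation (\<lambda>x. (Q x)\<^sup>2)" using variance_eq[OF assms(2,3)] by simp
  then show ?thesis by (rule real_le_rsqrt)
qed

lemma finite_net:
  fixes B :: "'u::real_normed_vector \<Rightarrow> 'w::real_normed_vector"
  assumes B: "compact_operator B" and E: "bounded E" and \<rho>: "\<rho> > 0"
  shows "\<exists>C. finite C \<and> C \<subseteq> B ` E \<and> (\<forall>s\<in>B ` E. \<exists>c\<in>C. dist s c \<le> \<rho>)"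
proof -
  have bl: "bounded_linear B" and K0: "compact (closure (B ` cball 0 1))"
    using B unfolding compact_operator_def by auto
  interpret bounded_linear B by fact
  obtain R where R0: "R > 0" and R: "\<And>v. v \<in> E \<Longrightarrow> norm v \<le> R" using E by (auto simp: bounded_pos)
  define T where "T = (\<lambda>y. R *\<^sub>R y) ` closure (B ` cball 0 1)"
  have cT: "compact T" unfolding T_def by (rule compact_scaling[OF K0])
  have sub: "B ` E \<subseteq> T"
  proof
    fix s assume "s \<in> B ` E"
    then obtain v where v: "v \<in> E" "s = B v" by auto
    have n1: "norm ((1 / R) *\<^sub>R v) = norm v / R" using R0 by simp
    have n2: "norm v / R \<le> 1" using R[OF v(1)] R0 by (simp add: divide_le_eq_1)
    have "(1 / R) *\<^sub>R v \<in> cball 0 1" using n1 n2 by (simp only: mem_cball_0)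
    then have "B ((1 / R) *\<^sub>R v) \<in> B ` cball 0 1" by (rule imageI)
    then have "B ((1 / R) *\<^sub>R v) \<in> closure (B ` cball 0 1)" by (rule subsetD[OF closure_subset])
    moreover have "s = R *\<^sub>R B ((1 / R) *\<^sub>R v)" using R0 v by (simp add: scaleR)
    ultimately show "s \<in> T" unfolding T_def by blast
  qed
  have half: "\<rho> / 2 > 0" using \<rho> by simp
  have ex: "\<exists>k. finite k \<and> k \<subseteq> T \<and> T \<subseteq> (\<Union>x\<in>k. ball x (\<rho> / 2))"
    by (rule seq_compact_imp_totally_bounded[OF compact_imp_seq_compact[OF cT], rule_format, OF half])
  then obtain k where k: "finite k" "k \<subseteq> T" "T \<subseteq> (\<Union>x\<in>k. ball x (\<rho> / 2))"
    by meson
  define k' where "k' = {x \<in> k. \<exists>s\<in>B ` E. s \<in> ball x (\<rho> / 2)}"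
  define pick where "pick x = (SOME s. s \<in> B ` E \<and> s \<in> ball x (\<rho> / 2))" for x
  have pick: "pick x \<in> B ` E \<and> pick x \<in> ball x (\<rho> / 2)" if "x \<in> k'" for x
    unfolding pick_def by (rule someI_ex) (use that k'_def in blast)
  show ?thesis
  proof (intro exI conjI ballI)
    show "finite (pick ` k')" using k(1) by (simp add: k'_def)
    show "pick ` k' \<subseteq> B ` E" using pick by blast
    fix s assume s: "s \<in> B ` E"
    then obtain x where x: "x \<in> k" "s \<in> ball x (\<rho> / 2)" using sub k(3) by blast
    then have xk: "x \<in> k'" using s by (auto simp: k'_def)
    have "dist s (pick x) \<le> dist s x + dist x (pick x)" by (rule dist_triangle)
    also have "\<dots> < \<rho> / 2 + \<rho> / 2" using x(2) pick[OF xk] by (intro add_strict_mono) (auto simp: dist_commute)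
    finally show "\<exists>c\<in>pick ` k'. dist s c \<le> \<rho>" using xk by force
  qed
qed

lemma carath_meas:
  fixes F :: "'x \<Rightarrow> 'u::{metric_space, second_countable_topology} \<Rightarrow> 'v::metric_space"
  assumes cont: "\<And>x. continuous_on S (F x)"
    and meas: "\<And>u. u \<in> S \<Longrightarrow> (\<lambda>x. F x u) \<in> borel_measurable N"
    and X: "X \<in> M \<rightarrow>\<^sub>M N" and U: "U \<in> borel_measurable M" and US: "\<And>\<omega>. U \<omega> \<in> S"
  shows "(\<lambda>\<omega>. F (X \<omega>) (U \<omega>)) \<in> borel_measurable M"
proof -
  have Sne: "S \<noteq> {}" using US by blast
  obtain D where D: "countable D" "D \<subseteq> S" "S \<subseteq> closure D" by (rule separable)
  have Dne: "D \<noteq> {}" using D(3) Sne by auto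
  define e where "e = from_nat_into D"
  have eD: "e k \<in> D" for k unfolding e_def by (rule from_nat_into[OF Dne])
  have reD: "range e = D" unfolding e_def using Dne D(1) by simp
  have [measurable]: "U \<in> borel_measurable M" by fact
  define idx where "idx n \<omega> = (LEAST k. dist (U \<omega>) (e k) < 1 / Suc n)" for n \<omega>
  have idx_ok: "dist (U \<omega>) (e (idx n \<omega>)) < 1 / Suc n" for n \<omega>
  proof -
    have "U \<omega> \<in> closure D" using D(3) US by blast
    then obtain d where "d \<in> D" "dist d (U \<omega>) < 1 / Suc n"
      unfolding closure_approachable by (meson of_nat_0_less_iff zero_less_Suc divide_pos_pos zero_less_one)
    moreover then obtain k where "d = e k" using reD by blast
    ultimately have "\<exists>k. dist (U \<omega>) (e k) < 1 / Suc n" by (auto simp: dist_commute)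
    then show ?thesis unfolding idx_def by (rule LeastI_ex)
  qed
  have idx_m: "idx n \<in> measurable M (count_space UNIV)" for n
    unfolding idx_def[abs_def] by measurable
  have Gm: "(\<lambda>\<omega>. F (X \<omega>) (e (idx n \<omega>))) \<in> borel_measurable M" for n
  proof (rule measurable_compose_countable'[where f="\<lambda>k \<omega>. F (X \<omega>) (e k)" and I=UNIV])
    fix k :: nat
    have "e k \<in> S" using eD D(2) by blast
    then show "(\<lambda>\<omega>. F (X \<omega>) (e k)) \<in> borel_measurable M"
      using measurable_compose[OF X meas] by blast
  qed (auto intro: idx_m)
  show ?thesis
  proof (rule borel_measurable_LIMSEQ_metric[OF Gm])
    fix \<omega>
    have lim0: "(\<lambda>n. 1 / real (Suc n)) \<longlonglongrightarrow> 0" using LIMSEQ_inverse_real_of_nat by (simp add: inverse_eq_divide)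
    have "(\<lambda>n. e (idx n \<omega>)) \<longlonglongrightarrow> U \<omega>"
    proof (rule tendstoI)
      fix \<epsilon> :: real assume "\<epsilon> > 0"
      then have "\<forall>\<^sub>F n in sequentially. 1 / real (Suc n) < \<epsilon>" using lim0 by (simp add: order_tendstoD(2))
      then show "\<forall>\<^sub>F n in sequentially. dist (e (idx n \<omega>)) (U \<omega>) < \<epsilon>"
        by eventually_elim (use idx_ok in \<open>auto simp: dist_commute intro: less_trans\<close>)
    qed
    moreover have "\<forall>\<^sub>F n in sequentially. e (idx n \<omega>) \<in> S" using eD D(2) by (intro always_eventually) blast
    ultimately show "(\<lambda>n. F (X \<omega>) (e (idx n \<omega>))) \<longlonglongrightarrow> F (X \<omega>) (U \<omega>)"
      using US by (intro continuous_on_tendsto_compose[OF cont]) auto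
  qed
qed

lemma lip_meas:
  fixes g :: "'x::topological_space \<Rightarrow> 'u::{real_normed_vector, second_countable_topology} \<Rightarrow> 'v::{real_normed_vector, second_countable_topology}"
    and B :: "'u \<Rightarrow> 'w::real_normed_vector"
  assumes Ene: "E \<noteq> {}" and cont: "\<And>x. continuous_on E (g x)" and Bc: "continuous_on E B"
    and meas: "\<And>u. u \<in> E \<Longrightarrow> (\<lambda>x. g x u) \<in> borel_measurable borel"
    and L0: "\<And>x. L x \<ge> 0"
    and lip: "\<And>x u1 u2. u1 \<in> E \<Longrightarrow> u2 \<in> E \<Longrightarrow> norm (g x u2 - g x u1) \<le> L x * norm (B u2 - B u1)"
  shows "\<exists>Ls. Ls \<in> borel_measurable borel \<and> (\<forall>x. 0 \<le> Ls x \<and> Ls x \<le> L x) \<and>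
     (\<forall>x u1 u2. u1 \<in> E \<longrightarrow> u2 \<in> E \<longrightarrow> norm (g x u2 - g x u1) \<le> Ls x * norm (B u2 - B u1))"
proof -
  obtain D where D: "countable D" "D \<subseteq> E" "E \<subseteq> closure D" by (rule separable)
  have Dne: "D \<noteq> {}" using D(3) Ene by auto
  define I where "I = D \<times> D"
  have Ic: "countable I" unfolding I_def using D(1) by simp
  have Ine: "I \<noteq> {}" unfolding I_def using Dne by simp
  define r where "r x ab = norm (g x (snd ab) - g x (fst ab)) / norm (B (snd ab) - B (fst ab))" for x ab
  define Ls where "Ls x = (SUP ab\<in>I. r x ab)" for x
  have r0: "0 \<le> r x ab" for x ab by (simp add: r_def)
  have rL: "r x ab \<le> L x" if "ab \<in> I" for x ab
  proof -
    have ab: "fst ab \<in> E" "snd ab \<in> E" using that D(2) by (auto simp: I_def)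
    show ?thesis
    proof (cases "B (snd ab) = B (fst ab)")
      case True then show ?thesis using L0 by (simp add: r_def)
    next
      case False
      then have pos: "norm (B (snd ab) - B (fst ab)) > 0" by simp
      show ?thesis unfolding r_def using lip[OF ab(1) ab(2)] pos by (simp add: pos_divide_le_eq)
    qed
  qed
  have bdd: "bdd_above ((\<lambda>ab. r x ab) ` I)" for x using rL by (intro bdd_aboveI2) auto
  have Ls0: "0 \<le> Ls x" for x
  proof -
    obtain ab where "ab \<in> I" using Ine by blast
    then have "r x ab \<le> Ls x" unfolding Ls_def by (intro cSUP_upper bdd)
    then show ?thesis using r0[of x ab] by linarith
  qed
  have LsL: "Ls x \<le> L x" for x unfolding Ls_def using Ine rL by (intro cSUP_least) auto
  have rm: "(\<lambda>x. r x ab) \<in> borel_measurable borel" if "ab \<in> I" for ab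
  proof -
    have ab: "fst ab \<in> E" "snd ab \<in> E" using that D(2) by (auto simp: I_def)
    have [measurable]: "(\<lambda>x. g x (fst ab)) \<in> borel_measurable borel" "(\<lambda>x. g x (snd ab)) \<in> borel_measurable borel"
      using meas ab by auto
    show ?thesis unfolding r_def
      by (intro borel_measurable_divide borel_measurable_norm borel_measurable_diff borel_measurable_const) (use meas ab in auto)
  qed
  have Lsm: "Ls \<in> borel_measurable borel"
    unfolding Ls_def[abs_def] by (rule borel_measurable_cSUP[OF Ic rm bdd])
  have lipD: "norm (g x b - g x a) \<le> Ls x * norm (B b - B a)" if "a \<in> D" "b \<in> D" for x a b
  proof (cases "B b = B a")
    case True
    have "norm (g x b - g x a) \<le> L x * norm (B b - B a)" using lip that D(2) by blast
    then show ?thesis using True by simp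
  next
    case False
    then have pos: "norm (B b - B a) > 0" by simp
    have "r x (a, b) \<le> Ls x" unfolding Ls_def using that by (intro cSUP_upper bdd) (auto simp: I_def)
    then show ?thesis using pos by (simp add: r_def pos_divide_le_eq)
  qed
  have lipE: "norm (g x u2 - g x u1) \<le> Ls x * norm (B u2 - B u1)" if u: "u1 \<in> E" "u2 \<in> E" for x u1 u2
  proof -
    obtain a where a: "\<And>n. a n \<in> D" "a \<longlonglongrightarrow> u1" using D(3) u(1) closure_sequential by blast
    obtain b where b: "\<And>n. b n \<in> D" "b \<longlonglongrightarrow> u2" using D(3) u(2) closure_sequential by blast
    have aE: "\<And>n. a n \<in> E" and bE: "\<And>n. b n \<in> E" using a(1) b(1) D(2) by auto
    have ga: "(\<lambda>n. g x (a n)) \<longlonglongrightarrow> g x u1" using a(2) u(1) aE by (intro continuous_on_tendsto_compose[OF cont] always_eventually) auto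
    have gb: "(\<lambda>n. g x (b n)) \<longlonglongrightarrow> g x u2" using b(2) u(2) bE by (intro continuous_on_tendsto_compose[OF cont] always_eventually) auto
    have Ba: "(\<lambda>n. B (a n)) \<longlonglongrightarrow> B u1" using a(2) u(1) aE by (intro continuous_on_tendsto_compose[OF Bc] always_eventually) auto
    have Bb: "(\<lambda>n. B (b n)) \<longlonglongrightarrow> B u2" using b(2) u(2) bE by (intro continuous_on_tendsto_compose[OF Bc] always_eventually) auto
    have lim: "(\<lambda>n. Ls x * norm (B (b n) - B (a n)) - norm (g x (b n) - g x (a n)))
        \<longlonglongrightarrow> Ls x * norm (B u2 - B u1) - norm (g x u2 - g x u1)"
      by (intro tendsto_diff tendsto_mult tendsto_const tendsto_norm ga gb Ba Bb)
    have "0 \<le> Ls x * norm (B u2 - B u1) - norm (g x u2 - g x u1)"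
      by (rule LIMSEQ_le_const[OF lim]) (use lipD a(1) b(1) in auto)
    then show ?thesis by simp
  qed
  show ?thesis using Lsm Ls0 LsL lipE by blast
qed

theorem corollary3p9:
  fixes M :: "'a measure"
    and \<psi> :: "'u::{real_inner, banach, second_countable_topology} \<Rightarrow> ereal"
    and B :: "'u \<Rightarrow> 'w::{banach, second_countable_topology}"
    and U0 :: "'u set"
    and \<xi> :: "'a \<Rightarrow> 'x::polish_space"
    and Xs :: "nat \<Rightarrow> 'a \<Rightarrow> 'x"
    and f :: "'w \<Rightarrow> 'x \<Rightarrow> real"
    and \<zeta>f \<zeta>Df LDf :: "'x \<Rightarrow> real"
    and gradg :: "'x \<Rightarrow> 'u \<Rightarrow> 'u"
    and Dwf :: "'w \<Rightarrow> 'x \<Rightarrow> ('w \<Rightarrow>\<^sub>L real)"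
    and \<tau> \<epsilon> :: real
    and N :: nat
    and uN :: "'a \<Rightarrow> 'u"
  assumes prob: "prob_space M" and compl: "complete_measure M"
    and \<xi>_rv: "\<xi> \<in> M \<rightarrow>\<^sub>M borel"
    and Xs_rv: "\<And>i. i \<ge> 1 \<Longrightarrow> Xs i \<in> M \<rightarrow>\<^sub>M borel"
    and Xs_indep: "prob_space.indep_vars M (\<lambda>_. borel) Xs {1..}"
    and Xs_distr: "\<And>i. i \<ge> 1 \<Longrightarrow> distr M borel (Xs i) = distr M borel \<xi>"
    and B_comp: "compact_operator B"
    and \<psi>_pcc: "proper_closed_convex \<psi>"
    and \<psi>_nonneg: "\<And>u. \<psi> u \<ge> 0"
    and dom_bdd: "bounded (edom \<psi>)"
    and U0: "open U0" "convex U0" "bounded U0" "edom \<psi> \<subseteq> U0"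
    and f_cont: "\<And>x. continuous_on (B ` edom \<psi>) (\<lambda>w. f w x)"
    and f_meas: "\<And>w. w \<in> B ` U0 \<Longrightarrow> (\<lambda>x. f w x) \<in> borel_measurable borel"
    and f_bound: "\<And>u x. u \<in> U0 \<Longrightarrow> \<bar>f (B u) x\<bar> \<le> \<zeta>f x"
    and \<zeta>f_int: "integrable M (\<lambda>\<omega>. \<zeta>f (\<xi> \<omega>))"
    and g_deriv: "\<And>x u. u \<in> U0 \<Longrightarrow>
        ((\<lambda>v. f (B v) x) has_derivative (\<lambda>h. inner (gradg x u) h)) (at u)"
    and g_C1: "\<And>x. continuous_on U0 (gradg x)"
    and Dwf_cont: "\<And>x. continuous_on (B ` edom \<psi>) (\<lambda>w. Dwf w x)"
    and Dwf_meas: "\<And>w. w \<in> B ` edom \<psi> \<Longrightarrow> (\<lambda>x. Dwf w x) \<in> borel_measurable borel"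
    and grad_repr: "\<And>x u. u \<in> edom \<psi> \<Longrightarrow> gradg x u = adj B (Dwf (B u) x)"
    and grad_bound: "\<And>x u. u \<in> U0 \<Longrightarrow> norm (gradg x u) \<le> \<zeta>Df x"
    and Dwf_bound: "\<And>x u. u \<in> edom \<psi> \<Longrightarrow> norm (Dwf (B u) x) \<le> \<zeta>Df x"
    and \<zeta>Df_int: "integrable M (\<lambda>\<omega>. \<zeta>Df (\<xi> \<omega>))"
    and LDf_nonneg: "\<And>x. LDf x \<ge> 0"
    and LDf_int: "integrable M (\<lambda>\<omega>. LDf (\<xi> \<omega>))"
    and grad_Lip: "\<And>x u1 u2. u1 \<in> edom \<psi> \<Longrightarrow> u2 \<in> edom \<psi> \<Longrightarrow>
        norm (gradg x u2 - gradg x u1) \<le> LDf x * norm (B u2 - B u1)"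
    and \<tau>_pos: "\<tau> > 0"
    and subgauss: "\<And>u. u \<in> edom \<psi> \<Longrightarrow>
        (\<integral>\<^sup>+ \<omega>. ennreal (exp ((norm (gradg (\<xi> \<omega>) u
              - integral\<^sup>L M (\<lambda>\<omega>'. gradg (\<xi> \<omega>') u)))\<^sup>2 / \<tau>\<^sup>2)) \<partial>M) \<le> ennreal (exp 1)"
    and N_pos: "N \<ge> 1"
    and uN_meas: "uN \<in> borel_measurable M"
    and uN_dom: "\<And>\<omega>. uN \<omega> \<in> edom \<psi>"
    and \<epsilon>_pos: "\<epsilon> > 0"
    and N_large: "real N \<ge> 12 * (diameter (edom \<psi>))\<^sup>2 * \<tau>\<^sup>2 / \<epsilon>\<^sup>2
        * real (covering_number
             (ereal \<epsilon> / ereal (4 * diameter (edom \<psi>) * integral\<^sup>L M (\<lambda>\<omega>. LDf (\<xi> \<omega>))))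
             (B ` edom \<psi>))"
  shows "integral\<^sup>L M (\<lambda>\<omega>. gap \<psi> B (DF M \<xi> Dwf (B (uN \<omega>))) (uN \<omega>))
         \<le> integral\<^sup>L M (\<lambda>\<omega>. gap \<psi> B (DFhat Xs Dwf N \<omega> (B (uN \<omega>))) (uN \<omega>)) + \<epsilon>"
proof -
  interpret prob_space M by (rule prob)
  define E where "E = edom \<psi>"
  define D where "D = diameter E"
  define P where "P = distr M borel \<xi>"
  define EL where "EL = integral\<^sup>L M (\<lambda>\<omega>. LDf (\<xi> \<omega>))"
  have Bbl: "bounded_linear B" using B_comp unfolding compact_operator_def by auto
  interpret Bl: bounded_linear B by (rule Bbl)
  have adjbl: "bounded_linear (adj B)" by (rule adj_bl[OF Bbl])
  interpret adjB: bounded_linear "adj B" by (rule adjbl)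
  have Ene: "E \<noteq> {}" using \<psi>_pcc unfolding proper_closed_convex_def E_def by auto
  have Ebdd: "bounded E" using dom_bdd by (simp add: E_def)
  have D0: "D \<ge> 0" unfolding D_def by (rule diameter_ge_0[OF Ebdd])
  have EL0: "EL \<ge> 0" unfolding EL_def using LDf_nonneg by (intro integral_nonneg_AE) auto
  have \<xi>m[measurable]: "\<xi> \<in> M \<rightarrow>\<^sub>M borel" by (rule \<xi>_rv)
  have EU0: "E \<subseteq> U0" using U0(4) by (simp add: E_def)
  have uNE: "uN \<omega> \<in> E" for \<omega> using uN_dom by (simp add: E_def)
  have gcont: "continuous_on E (gradg x)" for x using continuous_on_subset[OF g_C1 EU0] .
  have adjc: "continuous_on UNIV (adj B)" by (rule linear_continuous_on[OF adjbl])
  have gmeas: "(\<lambda>x. gradg x u) \<in> borel_measurable borel" if u: "u \<in> E" for u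
  proof -
    have "(\<lambda>x. Dwf (B u) x) \<in> borel_measurable borel" using Dwf_meas u by (simp add: E_def)
    then have "(\<lambda>x. adj B (Dwf (B u) x)) \<in> borel_measurable borel"
      by (rule borel_measurable_continuous_on[OF adjc])
    moreover have "(\<lambda>x. gradg x u) = (\<lambda>x. adj B (Dwf (B u) x))" using grad_repr u by (auto simp: E_def)
    ultimately show ?thesis by simp
  qed
  have gbound: "norm (gradg x u) \<le> \<zeta>Df x" if "u \<in> E" for x u using grad_bound that EU0 by blast
  have gint: "integrable M (\<lambda>\<omega>. gradg (\<xi> \<omega>) u)" if u: "u \<in> E" for u
  proof (rule Bochner_Integration.integrable_bound[OF \<zeta>Df_int])
    show "(\<lambda>\<omega>. gradg (\<xi> \<omega>) u) \<in> borel_measurable M" using measurable_compose[OF \<xi>m gmeas[OF u]] .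
    show "AE \<omega> in M. norm (gradg (\<xi> \<omega>) u) \<le> norm (\<zeta>Df (\<xi> \<omega>))"
      using gbound[OF u] by (auto intro: order_trans[OF _ abs_ge_self])
  qed
  define m where "m u = integral\<^sup>L M (\<lambda>\<omega>. gradg (\<xi> \<omega>) u)" for u
  define hat where "hat \<omega> u = (1 / real N) *\<^sub>R (\<Sum>i\<in>{1..N}. gradg (Xs i \<omega>) u)" for \<omega> u
  have F1: "adj B (DF M \<xi> Dwf (B u)) = m u" if u: "u \<in> E" for u
  proof -
    have Bu: "B u \<in> B ` edom \<psi>" using u by (simp add: E_def)
    have am: "(\<lambda>\<omega>. blinfun_apply (Dwf (B u) (\<xi> \<omega>)) y) \<in> borel_measurable M" for y
    proof -
      have "(\<lambda>x. blinfun_apply (Dwf (B u) x) y) \<in> borel_measurable borel"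
        by (rule borel_measurable_continuous_on[OF linear_continuous_on[OF blinfun.bounded_linear_left] Dwf_meas[OF Bu]])
      then show ?thesis using measurable_compose[OF \<xi>m] by blast
    qed
    have aint: "integrable M (\<lambda>\<omega>. blinfun_apply (Dwf (B u) (\<xi> \<omega>)) y)" for y
    proof (rule Bochner_Integration.integrable_bound[OF integrable_mult_left[OF \<zeta>Df_int] am])
      show "AE \<omega> in M. norm (blinfun_apply (Dwf (B u) (\<xi> \<omega>)) y) \<le> norm (\<zeta>Df (\<xi> \<omega>) * norm y)"
      proof (rule AE_I2)
        fix \<omega>
        have "norm (blinfun_apply (Dwf (B u) (\<xi> \<omega>)) y) \<le> norm (Dwf (B u) (\<xi> \<omega>)) * norm y" by (rule norm_blinfun)
        also have "\<dots> \<le> \<zeta>Df (\<xi> \<omega>) * norm y" using Dwf_bound u by (intro mult_right_mono) (auto simp: E_def)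
        also have "\<dots> \<le> norm (\<zeta>Df (\<xi> \<omega>) * norm y)" by simp
        finally show "norm (blinfun_apply (Dwf (B u) (\<xi> \<omega>)) y) \<le> norm (\<zeta>Df (\<xi> \<omega>) * norm y)" .
      qed
    qed
    have bl: "bounded_linear (\<lambda>y. integral\<^sup>L M (\<lambda>\<omega>. blinfun_apply (Dwf (B u) (\<xi> \<omega>)) y))"
    proof (rule bounded_linear_intro[where K="integral\<^sup>L M (\<lambda>\<omega>. \<zeta>Df (\<xi> \<omega>))"])
      fix y z
      show "integral\<^sup>L M (\<lambda>\<omega>. blinfun_apply (Dwf (B u) (\<xi> \<omega>)) (y + z)) =
        integral\<^sup>L M (\<lambda>\<omega>. blinfun_apply (Dwf (B u) (\<xi> \<omega>)) y) + integral\<^sup>L M (\<lambda>\<omega>. blinfun_apply (Dwf (B u) (\<xi> \<omega>)) z)"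
        using aint[of y] aint[of z] by (simp add: blinfun.add_right)
    next
      fix r y
      show "integral\<^sup>L M (\<lambda>\<omega>. blinfun_apply (Dwf (B u) (\<xi> \<omega>)) (r *\<^sub>R y)) =
        r *\<^sub>R integral\<^sup>L M (\<lambda>\<omega>. blinfun_apply (Dwf (B u) (\<xi> \<omega>)) y)"
        by (simp add: blinfun.scaleR_right)
    next
      fix y
      have "norm (integral\<^sup>L M (\<lambda>\<omega>. blinfun_apply (Dwf (B u) (\<xi> \<omega>)) y))
          \<le> integral\<^sup>L M (\<lambda>\<omega>. norm (blinfun_apply (Dwf (B u) (\<xi> \<omega>)) y))" by (rule integral_norm_bound)
      also have "\<dots> \<le> integral\<^sup>L M (\<lambda>\<omega>. \<zeta>Df (\<xi> \<omega>) * norm y)"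
      proof (rule integral_mono)
        show "integrable M (\<lambda>\<omega>. norm (blinfun_apply (Dwf (B u) (\<xi> \<omega>)) y))" using aint by (rule integrable_norm)
        show "integrable M (\<lambda>\<omega>. \<zeta>Df (\<xi> \<omega>) * norm y)" using \<zeta>Df_int by (rule integrable_mult_left)
        fix \<omega>
        have "norm (blinfun_apply (Dwf (B u) (\<xi> \<omega>)) y) \<le> norm (Dwf (B u) (\<xi> \<omega>)) * norm y" by (rule norm_blinfun)
        also have "\<dots> \<le> \<zeta>Df (\<xi> \<omega>) * norm y" using Dwf_bound u by (intro mult_right_mono) (auto simp: E_def)
        finally show "norm (blinfun_apply (Dwf (B u) (\<xi> \<omega>)) y) \<le> \<zeta>Df (\<xi> \<omega>) * norm y" .
      qed
      also have "\<dots> = norm y * integral\<^sup>L M (\<lambda>\<omega>. \<zeta>Df (\<xi> \<omega>))" by simp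
      finally show "norm (integral\<^sup>L M (\<lambda>\<omega>. blinfun_apply (Dwf (B u) (\<xi> \<omega>)) y))
          \<le> norm y * integral\<^sup>L M (\<lambda>\<omega>. \<zeta>Df (\<xi> \<omega>))" .
    qed
    have "inner (adj B (DF M \<xi> Dwf (B u))) x = inner (m u) x" for x
    proof -
      have "inner (adj B (DF M \<xi> Dwf (B u))) x = blinfun_apply (DF M \<xi> Dwf (B u)) (B x)" by (rule adj_char[OF Bbl])
      also have "\<dots> = integral\<^sup>L M (\<lambda>\<omega>. blinfun_apply (Dwf (B u) (\<xi> \<omega>)) (B x))"
        unfolding DF_def bounded_linear_Blinfun_apply[OF bl] ..
      also have "\<dots> = integral\<^sup>L M (\<lambda>\<omega>. inner (gradg (\<xi> \<omega>) u) x)"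
        using grad_repr u by (simp add: adj_char[OF Bbl] E_def)
      also have "\<dots> = inner (m u) x" unfolding m_def using gint[OF u] by simp
      finally show ?thesis .
    qed
    then show ?thesis by (rule inner_ext_eq)
  qed
  have F2: "adj B (DFhat Xs Dwf N \<omega> (B u)) = hat \<omega> u" if u: "u \<in> E" for u \<omega>
    unfolding DFhat_def hat_def using grad_repr u by (simp add: adjB.scaleR adjB.sum E_def)
  have Xm: "Xs i \<in> M \<rightarrow>\<^sub>M borel" if "i \<ge> 1" for i using Xs_rv that .
  have gXm: "(\<lambda>\<omega>. gradg (Xs i \<omega>) u) \<in> borel_measurable M" if "i \<in> {1..N}" "u \<in> E" for i u
    using measurable_compose[OF Xm gmeas[OF that(2)]] that(1) by auto
  have hat_m: "(\<lambda>\<omega>. hat \<omega> u) \<in> borel_measurable M" if u: "u \<in> E" for u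
    unfolding hat_def using gXm[OF _ u]
    by (intro borel_measurable_scaleR borel_measurable_const borel_measurable_sum) auto
  have XdP: "distr M borel (Xs i) = P" if "i \<ge> 1" for i using Xs_distr that by (simp add: P_def)
  have var: "integrable M (\<lambda>\<omega>. (norm (hat \<omega> u - m u))\<^sup>2) \<and>
      integral\<^sup>L M (\<lambda>\<omega>. (norm (hat \<omega> u - m u))\<^sup>2) \<le> \<tau>\<^sup>2 / real N" if u: "u \<in> E" for u
  proof -
    define \<phi> where "\<phi> x = gradg x u - m u" for x
    have \<phi>m: "\<phi> \<in> borel_measurable borel" unfolding \<phi>_def[abs_def] using gmeas[OF u]
      by (intro borel_measurable_diff borel_measurable_const) auto
    have \<phi>M: "integrable M (\<lambda>\<omega>. \<phi> (\<xi> \<omega>))" unfolding \<phi>_def using gint[OF u] by simp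
    have int: "integrable P \<phi>" unfolding P_def using \<phi>M by (subst integrable_distr_eq[OF \<xi>m \<phi>m])
    have "integral\<^sup>L P \<phi> = integral\<^sup>L M (\<lambda>\<omega>. \<phi> (\<xi> \<omega>))" unfolding P_def by (rule integral_distr[OF \<xi>m \<phi>m])
    also have "\<dots> = integral\<^sup>L M (\<lambda>\<omega>. gradg (\<xi> \<omega>) u) - integral\<^sup>L M (\<lambda>\<omega>. m u)"
      unfolding \<phi>_def using gint[OF u] by (intro Bochner_Integration.integral_diff) auto
    also have "\<dots> = 0" by (simp add: m_def prob_space)
    finally have int0: "integral\<^sup>L P \<phi> = 0" .
    have sqm: "(\<lambda>x. (norm (\<phi> x))\<^sup>2) \<in> borel_measurable borel" using \<phi>m by measurable
    have Zm: "(\<lambda>\<omega>. (norm (\<phi> (\<xi> \<omega>)))\<^sup>2) \<in> borel_measurable M" using measurable_compose[OF \<xi>m sqm] by simp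
    have sg: "(\<integral>\<^sup>+\<omega>. ennreal (exp ((norm (\<phi> (\<xi> \<omega>)))\<^sup>2 / \<tau>\<^sup>2)) \<partial>M) \<le> ennreal (exp 1)"
      using subgauss[of u] u by (simp add: \<phi>_def m_def E_def)
    have sqM: "integrable M (\<lambda>\<omega>. (norm (\<phi> (\<xi> \<omega>)))\<^sup>2)" "integral\<^sup>L M (\<lambda>\<omega>. (norm (\<phi> (\<xi> \<omega>)))\<^sup>2) \<le> \<tau>\<^sup>2"
      using subgauss_sq[OF Zm _ \<tau>_pos sg] by auto
    have sq: "integrable P (\<lambda>x. (norm (\<phi> x))\<^sup>2)" unfolding P_def using sqM(1)
      by (subst integrable_distr_eq[OF \<xi>m sqm])
    have "integral\<^sup>L P (\<lambda>x. (norm (\<phi> x))\<^sup>2) = integral\<^sup>L M (\<lambda>\<omega>. (norm (\<phi> (\<xi> \<omega>)))\<^sup>2)"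
      unfolding P_def by (rule integral_distr[OF \<xi>m sqm])
    then have sqb: "integral\<^sup>L P (\<lambda>x. (norm (\<phi> x))\<^sup>2) \<le> \<tau>\<^sup>2" using sqM(2) by simp
    note vm = var_mean[OF prob Xs_rv Xs_indep XdP \<phi>m int int0 sq sqb N_pos]
    have eq: "(1 / real N) *\<^sub>R (\<Sum>i\<in>{1..N}. \<phi> (Xs i \<omega>)) = hat \<omega> u - m u" for \<omega>
    proof -
      have "(\<Sum>i\<in>{1..N}. \<phi> (Xs i \<omega>)) = (\<Sum>i\<in>{1..N}. gradg (Xs i \<omega>) u) - real N *\<^sub>R m u"
        by (simp add: \<phi>_def sum_subtractf sum_constant_scaleR)
      then show ?thesis using N_pos by (simp add: hat_def scaleR_diff_right)
    qed
    show ?thesis using vm unfolding eq by simp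
  qed
  define \<rho>e where "\<rho>e = ereal \<epsilon> / ereal (4 * D * EL)"
  define K where "K = covering_number \<rho>e (B ` E)"
  define good where "good = (D > 0 \<and> EL > 0)"
  define r where "r = (if good then \<epsilon> / (4 * D * EL) else diameter (B ` E))"
  have BEbdd: "bounded (B ` E)" by (rule bounded_linear_image[OF Ebdd Bbl])
  have r0: "r \<ge> 0" using diameter_ge_0[OF BEbdd] \<epsilon>_pos by (auto simp: r_def good_def)
  have \<rho>good: "\<rho>e = ereal (\<epsilon> / (4 * D * EL))" if good using that by (simp add: \<rho>e_def good_def)
  have netex: "\<exists>C. finite C \<and> C \<subseteq> B ` E \<and> (\<forall>s\<in>B ` E. \<exists>c\<in>C. ereal (dist s c) \<le> \<rho>e)"
  proof (cases good)
    case True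
    then have pos: "\<epsilon> / (4 * D * EL) > 0" using \<epsilon>_pos by (simp add: good_def)
    obtain C where C: "finite C" "C \<subseteq> B ` E" "\<forall>s\<in>B ` E. \<exists>c\<in>C. dist s c \<le> \<epsilon> / (4 * D * EL)"
      using finite_net[OF B_comp Ebdd pos] by blast
    show ?thesis using C \<rho>good[OF True] by (intro exI[of _ C]) auto
  next
    case False
    then have "4 * D * EL = 0" using D0 EL0 by (auto simp: good_def)
    then have inf: "\<rho>e = \<infinity>" using \<epsilon>_pos by (simp add: \<rho>e_def)
    obtain u0 where "u0 \<in> E" using Ene by blast
    then show ?thesis using inf by (intro exI[of _ "{B u0}"]) auto
  qed
  have "\<exists>C. finite C \<and> C \<subseteq> B ` E \<and> card C = K \<and> (\<forall>s\<in>B ` E. \<exists>c\<in>C. ereal (dist s c) \<le> \<rho>e)"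
    unfolding K_def covering_number_def
    by (rule LeastI_ex) (use netex in blast)
  then obtain C where C: "finite C" "C \<subseteq> B ` E" "card C = K" and Cnet: "\<And>s. s \<in> B ` E \<Longrightarrow> \<exists>c\<in>C. ereal (dist s c) \<le> \<rho>e"
    by blast
  have netr: "\<exists>c\<in>C. dist s c \<le> r" if s: "s \<in> B ` E" for s
  proof -
    obtain c where c: "c \<in> C" "ereal (dist s c) \<le> \<rho>e" using Cnet[OF s] by blast
    show ?thesis
    proof (cases good)
      case True then show ?thesis using c \<rho>good[OF True] by (auto simp: r_def)
    next
      case False
      have "dist s c \<le> diameter (B ` E)" using diameter_bounded_bound[OF BEbdd s] c(1) C(2) by blast
      then show ?thesis using c(1) False by (auto simp: r_def)
    qed
  qed
  define uc where "uc c = (SOME u. u \<in> E \<and> B u = c)" for c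
  have uc: "uc c \<in> E \<and> B (uc c) = c" if "c \<in> C" for c
    unfolding uc_def by (rule someI_ex) (use that C(2) in blast)
  have Bcont: "continuous_on E B" by (rule linear_continuous_on[OF Bbl])
  obtain Ls where Lsm: "Ls \<in> borel_measurable borel" and Ls0: "\<And>x. 0 \<le> Ls x" and LsL: "\<And>x. Ls x \<le> LDf x"
    and Lslip: "\<And>x u1 u2. u1 \<in> E \<Longrightarrow> u2 \<in> E \<Longrightarrow> norm (gradg x u2 - gradg x u1) \<le> Ls x * norm (B u2 - B u1)"
    using lip_meas[OF Ene gcont Bcont gmeas LDf_nonneg grad_Lip[unfolded E_def[symmetric]]] by blast
  define ELs where "ELs = integral\<^sup>L M (\<lambda>\<omega>. Ls (\<xi> \<omega>))"
  have Lsxm: "(\<lambda>\<omega>. Ls (\<xi> \<omega>)) \<in> borel_measurable M" using measurable_compose[OF \<xi>m Lsm] .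
  have Lsint: "integrable M (\<lambda>\<omega>. Ls (\<xi> \<omega>))"
    by (rule Bochner_Integration.integrable_bound[OF LDf_int Lsxm]) (use Ls0 LsL LDf_nonneg in auto)
  have ELs0: "0 \<le> ELs" unfolding ELs_def using Ls0 by (intro integral_nonneg_AE) auto
  have ELsL: "ELs \<le> EL" unfolding ELs_def EL_def using Lsint LDf_int LsL by (intro integral_mono) auto
  define Lhat where "Lhat \<omega> = (1 / real N) * (\<Sum>i\<in>{1..N}. Ls (Xs i \<omega>))" for \<omega>
  have LsX: "integrable M (\<lambda>\<omega>. Ls (Xs i \<omega>)) \<and> integral\<^sup>L M (\<lambda>\<omega>. Ls (Xs i \<omega>)) = ELs" if i: "i \<in> {1..N}" for i
  proof -
    have i1: "i \<ge> 1" using i by simp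
    have "integrable P Ls" unfolding P_def using Lsint by (subst integrable_distr_eq[OF \<xi>m Lsm])
    then have "integrable (distr M borel (Xs i)) Ls" using XdP[OF i1] by simp
    then have 1: "integrable M (\<lambda>\<omega>. Ls (Xs i \<omega>))" by (subst (asm) integrable_distr_eq[OF Xm[OF i1] Lsm])
    have "integral\<^sup>L M (\<lambda>\<omega>. Ls (Xs i \<omega>)) = integral\<^sup>L (distr M borel (Xs i)) Ls"
      by (rule integral_distr[OF Xm[OF i1] Lsm, symmetric])
    also have "\<dots> = integral\<^sup>L M (\<lambda>\<omega>. Ls (\<xi> \<omega>))" using XdP[OF i1] unfolding P_def by (simp add: integral_distr[OF \<xi>m Lsm])
    finally show ?thesis using 1 by (simp add: ELs_def)
  qed
  have Lhat_int: "integrable M Lhat" unfolding Lhat_def[abs_def] using LsX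
    by (intro integrable_mult_right Bochner_Integration.integrable_sum) auto
  have Lhat_E: "integral\<^sup>L M Lhat = ELs"
  proof -
    have "integral\<^sup>L M Lhat = (1 / real N) * (\<Sum>i\<in>{1..N}. integral\<^sup>L M (\<lambda>\<omega>. Ls (Xs i \<omega>)))"
      unfolding Lhat_def[abs_def] using LsX by (simp add: Bochner_Integration.integral_sum)
    also have "\<dots> = (1 / real N) * (\<Sum>i\<in>{1..N}. ELs)" using LsX by simp
    also have "\<dots> = ELs" using N_pos by simp
    finally show ?thesis .
  qed
  have Lhat0: "0 \<le> Lhat \<omega>" for \<omega> unfolding Lhat_def using Ls0 by (simp add: sum_nonneg)
  define Q where "Q \<omega> = sqrt (\<Sum>c\<in>C. (norm (hat \<omega> (uc c) - m (uc c)))\<^sup>2)" for \<omega>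
  have pw: "norm (m (uN \<omega>) - hat \<omega> (uN \<omega>)) \<le> Q \<omega> + (ELs + Lhat \<omega>) * r" for \<omega>
  proof -
    define u where "u = uN \<omega>"
    have uE: "u \<in> E" by (simp add: u_def uNE)
    obtain c where c: "c \<in> C" "dist (B u) c \<le> r" using netr[of "B u"] uE by blast
    define v where "v = uc c"
    have vE: "v \<in> E" and Bv: "B v = c" using uc[OF c(1)] by (auto simp: v_def)
    have d: "norm (B u - B v) \<le> r" using c(2) Bv by (simp add: dist_norm)
    have t1: "norm (m u - m v) \<le> ELs * r"
    proof -
      have "m u - m v = integral\<^sup>L M (\<lambda>\<omega>'. gradg (\<xi> \<omega>') u - gradg (\<xi> \<omega>') v)"
        unfolding m_def by (rule Bochner_Integration.integral_diff[OF gint[OF uE] gint[OF vE], symmetric])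
      also have "norm \<dots> \<le> integral\<^sup>L M (\<lambda>\<omega>'. norm (gradg (\<xi> \<omega>') u - gradg (\<xi> \<omega>') v))"
        by (rule integral_norm_bound)
      also have "\<dots> \<le> integral\<^sup>L M (\<lambda>\<omega>'. Ls (\<xi> \<omega>') * norm (B u - B v))"
      proof (rule integral_mono)
        show "integrable M (\<lambda>\<omega>'. norm (gradg (\<xi> \<omega>') u - gradg (\<xi> \<omega>') v))"
          using gint[OF uE] gint[OF vE] by (intro integrable_norm Bochner_Integration.integrable_diff)
        show "integrable M (\<lambda>\<omega>'. Ls (\<xi> \<omega>') * norm (B u - B v))" using Lsint by (rule integrable_mult_left)
        fix \<omega>' show "norm (gradg (\<xi> \<omega>') u - gradg (\<xi> \<omega>') v) \<le> Ls (\<xi> \<omega>') * norm (B u - B v)"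
          using Lslip[OF vE uE] .
      qed
      also have "\<dots> = ELs * norm (B u - B v)" by (simp add: ELs_def)
      also have "\<dots> \<le> ELs * r" using d ELs0 by (rule mult_left_mono)
      finally show ?thesis .
    qed
    have t2: "norm (hat \<omega> v - hat \<omega> u) \<le> Lhat \<omega> * r"
    proof -
      have "hat \<omega> v - hat \<omega> u = (1 / real N) *\<^sub>R (\<Sum>i\<in>{1..N}. gradg (Xs i \<omega>) v - gradg (Xs i \<omega>) u)"
        by (simp add: hat_def scaleR_diff_right sum_subtractf)
      also have "norm \<dots> = (1 / real N) * norm (\<Sum>i\<in>{1..N}. gradg (Xs i \<omega>) v - gradg (Xs i \<omega>) u)" by simp
      also have "\<dots> \<le> (1 / real N) * (\<Sum>i\<in>{1..N}. norm (gradg (Xs i \<omega>) v - gradg (Xs i \<omega>) u))"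
        by (intro mult_left_mono norm_sum) simp
      also have "\<dots> \<le> (1 / real N) * (\<Sum>i\<in>{1..N}. Ls (Xs i \<omega>) * norm (B u - B v))"
        by (intro mult_left_mono sum_mono) (use Lslip[OF uE vE] in \<open>auto simp: norm_minus_commute\<close>)
      also have "\<dots> = Lhat \<omega> * norm (B u - B v)" by (simp add: Lhat_def sum_distrib_right)
      also have "\<dots> \<le> Lhat \<omega> * r" using d Lhat0 by (rule mult_left_mono)
      finally show ?thesis .
    qed
    have t3: "norm (m v - hat \<omega> v) \<le> Q \<omega>"
    proof -
      have "(norm (hat \<omega> v - m v))\<^sup>2 \<le> (\<Sum>c\<in>C. (norm (hat \<omega> (uc c) - m (uc c)))\<^sup>2)"
        unfolding v_def by (rule member_le_sum[OF c(1) _ C(1)]) simp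
      then have "norm (hat \<omega> v - m v) \<le> Q \<omega>" unfolding Q_def by (rule real_le_rsqrt)
      then show ?thesis by (simp add: norm_minus_commute)
    qed
    have eq3: "m u - hat \<omega> u = (m u - m v) + (m v - hat \<omega> v) + (hat \<omega> v - hat \<omega> u)" by simp
    have n1: "norm ((m u - m v) + (m v - hat \<omega> v) + (hat \<omega> v - hat \<omega> u))
        \<le> norm ((m u - m v) + (m v - hat \<omega> v)) + norm (hat \<omega> v - hat \<omega> u)" by (rule norm_triangle_ineq)
    have n2: "norm ((m u - m v) + (m v - hat \<omega> v)) \<le> norm (m u - m v) + norm (m v - hat \<omega> v)"
      by (rule norm_triangle_ineq)
    have "norm (m u - hat \<omega> u) \<le> norm (m u - m v) + norm (m v - hat \<omega> v) + norm (hat \<omega> v - hat \<omega> u)"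
      unfolding eq3 using n1 n2 by linarith
    also have "\<dots> \<le> ELs * r + Q \<omega> + Lhat \<omega> * r" using t1 t2 t3 by linarith
    also have "\<dots> = Q \<omega> + (ELs + Lhat \<omega>) * r" by (simp add: algebra_simps)
    finally show ?thesis by (simp add: u_def)
  qed
  define g1 where "g1 \<omega> = gap \<psi> B (DF M \<xi> Dwf (B (uN \<omega>))) (uN \<omega>)" for \<omega>
  define g2 where "g2 \<omega> = gap \<psi> B (DFhat Xs Dwf N \<omega> (B (uN \<omega>))) (uN \<omega>)" for \<omega>
  define h where "h \<omega> = D * (Q \<omega> + (ELs + Lhat \<omega>) * r)" for \<omega>
  have dnorm: "D * norm (adj B (DF M \<xi> Dwf (B (uN \<omega>))) - adj B (DFhat Xs Dwf N \<omega> (B (uN \<omega>)))) \<le> h \<omega>" for \<omega>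
    unfolding F1[OF uNE] F2[OF uNE] h_def using pw D0 by (rule mult_left_mono)
  have g12: "g1 \<omega> \<le> g2 \<omega> + h \<omega>" for \<omega>
    using gap_cmp[OF dom_bdd \<psi>_nonneg uN_dom[of \<omega>], of B "DF M \<xi> Dwf (B (uN \<omega>))" "DFhat Xs Dwf N \<omega> (B (uN \<omega>))"]
      dnorm[of \<omega>] unfolding g1_def g2_def D_def E_def by linarith
  have g21: "g2 \<omega> \<le> g1 \<omega> + h \<omega>" for \<omega>
    using gap_cmp[OF dom_bdd \<psi>_nonneg uN_dom[of \<omega>], of B "DFhat Xs Dwf N \<omega> (B (uN \<omega>))" "DF M \<xi> Dwf (B (uN \<omega>))"]
      dnorm[of \<omega>] unfolding g1_def g2_def D_def E_def by (simp add: norm_minus_commute)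
  have g1nn: "0 \<le> g1 \<omega>" for \<omega> unfolding g1_def by (rule gap_nonneg[OF dom_bdd \<psi>_nonneg uN_dom])
  have g2nn: "0 \<le> g2 \<omega>" for \<omega> unfolding g2_def by (rule gap_nonneg[OF dom_bdd \<psi>_nonneg uN_dom])
  have sqm: "(\<lambda>\<omega>. (norm (hat \<omega> (uc c) - m (uc c)))\<^sup>2) \<in> borel_measurable M" if "c \<in> C" for c
  proof -
    have [measurable]: "(\<lambda>\<omega>. hat \<omega> (uc c)) \<in> borel_measurable M" using hat_m uc that by blast
    show ?thesis by measurable
  qed
  have S0: "0 \<le> (\<Sum>c\<in>C. (norm (hat \<omega> (uc c) - m (uc c)))\<^sup>2)" for \<omega> by (simp add: sum_nonneg)
  have Qsq: "(Q \<omega>)\<^sup>2 = (\<Sum>c\<in>C. (norm (hat \<omega> (uc c) - m (uc c)))\<^sup>2)" for \<omega>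
    unfolding Q_def using S0 by simp
  have Q0: "0 \<le> Q \<omega>" for \<omega> unfolding Q_def using S0[of \<omega>] by simp
  have Sm: "(\<lambda>\<omega>. \<Sum>c\<in>C. (norm (hat \<omega> (uc c) - m (uc c)))\<^sup>2) \<in> borel_measurable M"
    using sqm by (intro borel_measurable_sum) auto
  have Qm: "Q \<in> borel_measurable M" unfolding Q_def[abs_def] using Sm by measurable
  have Q2int: "integrable M (\<lambda>\<omega>. (Q \<omega>)\<^sup>2)" unfolding Qsq
    using var uc by (intro Bochner_Integration.integrable_sum) auto
  have Q2E: "integral\<^sup>L M (\<lambda>\<omega>. (Q \<omega>)\<^sup>2) \<le> real K * (\<tau>\<^sup>2 / real N)"
  proof -
    have "integral\<^sup>L M (\<lambda>\<omega>. (Q \<omega>)\<^sup>2) = (\<Sum>c\<in>C. integral\<^sup>L M (\<lambda>\<omega>. (norm (hat \<omega> (uc c) - m (uc c)))\<^sup>2))"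
      unfolding Qsq using var uc by (intro Bochner_Integration.integral_sum) auto
    also have "\<dots> \<le> (\<Sum>c\<in>C. \<tau>\<^sup>2 / real N)" using var uc by (intro sum_mono) auto
    also have "\<dots> = real K * (\<tau>\<^sup>2 / real N)" using C(3) by simp
    finally show ?thesis .
  qed
  have Qint: "integrable M Q"
  proof (rule Bochner_Integration.integrable_bound[where f="\<lambda>\<omega>. 1 + (Q \<omega>)\<^sup>2"])
    show "integrable M (\<lambda>\<omega>. 1 + (Q \<omega>)\<^sup>2)" using Q2int by simp
    show "Q \<in> borel_measurable M" by (rule Qm)
    show "AE \<omega> in M. norm (Q \<omega>) \<le> norm (1 + (Q \<omega>)\<^sup>2)"
    proof (rule AE_I2)
      fix \<omega>
      have "Q \<omega> \<le> 1 + (Q \<omega>)\<^sup>2"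
      proof (cases "Q \<omega> \<le> 1")
        case True then show ?thesis by (simp add: add_increasing2)
      next
        case False
        then have "Q \<omega> * 1 \<le> Q \<omega> * Q \<omega>" using Q0[of \<omega>] by (intro mult_left_mono) auto
        then show ?thesis by (simp add: power2_eq_square)
      qed
      then show "norm (Q \<omega>) \<le> norm (1 + (Q \<omega>)\<^sup>2)" using Q0[of \<omega>] by simp
    qed
  qed
  have EQ: "integral\<^sup>L M Q \<le> sqrt (real K * (\<tau>\<^sup>2 / real N))"
    using exp_le_sqrt[OF prob Qint Q2int] real_sqrt_le_mono[OF Q2E] by linarith
  have hint: "integrable M h" unfolding h_def[abs_def] using Qint Lhat_int
    by (intro integrable_mult_right Bochner_Integration.integrable_add integrable_mult_left) auto
  have Eh: "integral\<^sup>L M h = D * integral\<^sup>L M Q + D * ((ELs + ELs) * r)"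
  proof -
    have "integral\<^sup>L M h = D * (integral\<^sup>L M Q + integral\<^sup>L M (\<lambda>\<omega>. (ELs + Lhat \<omega>) * r))"
      unfolding h_def[abs_def] using Qint Lhat_int
      by (simp add: Bochner_Integration.integral_add integrable_mult_left)
    also have "integral\<^sup>L M (\<lambda>\<omega>. (ELs + Lhat \<omega>) * r) = (ELs + ELs) * r"
      using Lhat_int Lhat_E by (simp add: Bochner_Integration.integral_add prob_space)
    finally show ?thesis by (simp add: algebra_simps)
  qed
  have NL: "real N \<ge> 12 * D\<^sup>2 * \<tau>\<^sup>2 / \<epsilon>\<^sup>2 * real K"
    using N_large unfolding K_def \<rho>e_def D_def EL_def E_def .
  have Npos: "real N > 0" using N_pos by simp
  have part1: "D * integral\<^sup>L M Q \<le> \<epsilon> / 2"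
  proof (cases "D = 0")
    case True then show ?thesis using \<epsilon>_pos by simp
  next
    case False
    then have Dp: "D > 0" using D0 by simp
    have "12 * D\<^sup>2 * \<tau>\<^sup>2 / \<epsilon>\<^sup>2 * real K * \<epsilon>\<^sup>2 \<le> real N * \<epsilon>\<^sup>2"
      using NL \<epsilon>_pos by (intro mult_right_mono) auto
    then have "12 * (D\<^sup>2 * (real K * \<tau>\<^sup>2)) \<le> real N * \<epsilon>\<^sup>2" using \<epsilon>_pos by (simp add: field_simps)
    then have a0: "D\<^sup>2 * (real K * \<tau>\<^sup>2) / real N \<le> \<epsilon>\<^sup>2 / 12" using Npos by (simp add: field_simps)
    have eqa: "D\<^sup>2 * (real K * (\<tau>\<^sup>2 / real N)) = D\<^sup>2 * (real K * \<tau>\<^sup>2) / real N" by simp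
    have eqb: "(\<epsilon> / 2)\<^sup>2 = \<epsilon>\<^sup>2 / 4" by (simp add: power_divide)
    have "\<epsilon>\<^sup>2 / 12 \<le> \<epsilon>\<^sup>2 / 4" by simp
    then have a: "D\<^sup>2 * (real K * (\<tau>\<^sup>2 / real N)) \<le> (\<epsilon> / 2)\<^sup>2"
      using a0 eqa eqb by linarith
    have "D * integral\<^sup>L M Q \<le> D * sqrt (real K * (\<tau>\<^sup>2 / real N))" using EQ D0 by (rule mult_left_mono)
    also have "\<dots> = sqrt (D\<^sup>2 * (real K * (\<tau>\<^sup>2 / real N)))"
    proof -
      have sq1: "sqrt (D\<^sup>2 * (real K * (\<tau>\<^sup>2 / real N))) = sqrt (D\<^sup>2) * sqrt (real K * (\<tau>\<^sup>2 / real N))"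
        by (rule real_sqrt_mult)
      have sq2: "sqrt (D\<^sup>2) = D" using D0 by simp
      show ?thesis by (simp only: sq1 sq2)
    qed
    also have "\<dots> \<le> sqrt ((\<epsilon> / 2)\<^sup>2)" using a by (rule real_sqrt_le_mono)
    also have "\<dots> = \<epsilon> / 2" using \<epsilon>_pos by simp
    finally show ?thesis .
  qed
  have part2: "D * ((ELs + ELs) * r) \<le> \<epsilon> / 2"
  proof (cases good)
    case True
    then have Dp: "D > 0" and ELp: "EL > 0" by (auto simp: good_def)
    have "D * ((ELs + ELs) * r) = ELs * \<epsilon> / (2 * EL)" using True Dp ELp by (simp add: r_def field_simps)
    also have "\<dots> \<le> EL * \<epsilon> / (2 * EL)" using ELsL \<epsilon>_pos ELp by (intro divide_right_mono mult_right_mono) auto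
    also have "\<dots> = \<epsilon> / 2" using ELp by simp
    finally show ?thesis .
  next
    case False
    then have "D = 0 \<or> EL = 0" using D0 EL0 by (auto simp: good_def)
    then have "D = 0 \<or> ELs = 0" using ELs0 ELsL by auto
    then show ?thesis using \<epsilon>_pos by auto
  qed
  have Eh_le: "integral\<^sup>L M h \<le> \<epsilon>" using Eh part1 part2 by linarith
  have h0: "0 \<le> h \<omega>" for \<omega> unfolding h_def using D0 Q0 ELs0 Lhat0 r0 by simp
  have hatuN_m: "(\<lambda>\<omega>. hat \<omega> (uN \<omega>)) \<in> borel_measurable M"
  proof -
    have "(\<lambda>\<omega>. gradg (Xs i \<omega>) (uN \<omega>)) \<in> borel_measurable M" if "i \<in> {1..N}" for i
      using carath_meas[OF gcont gmeas Xm uN_meas uNE] that by auto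
    then show ?thesis unfolding hat_def
      by (intro borel_measurable_scaleR borel_measurable_const borel_measurable_sum) auto
  qed
  have g2eq: "g2 \<omega> = inner (hat \<omega> (uN \<omega>)) (uN \<omega>) + real_of_ereal (\<psi> (uN \<omega>)) + H0 \<psi> (hat \<omega> (uN \<omega>))" for \<omega>
    unfolding g2_def gap_decomp[OF dom_bdd \<psi>_nonneg uN_dom] F2[OF uNE] ..
  have H0c: "continuous_on UNIV (H0 \<psi>)" using H0_lip[OF dom_bdd \<psi>_nonneg] Ene by (simp add: E_def)
  have \<psi>m: "(\<lambda>\<omega>. \<psi> (uN \<omega>)) \<in> borel_measurable M" using measurable_compose[OF uN_meas psi_meas[OF \<psi>_pcc]] .
  have g2m: "g2 \<in> borel_measurable M"
  proof -
    have [measurable]: "(\<lambda>\<omega>. hat \<omega> (uN \<omega>)) \<in> borel_measurable M" "uN \<in> borel_measurable M"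
      "(\<lambda>\<omega>. \<psi> (uN \<omega>)) \<in> borel_measurable M" "(\<lambda>\<omega>. H0 \<psi> (hat \<omega> (uN \<omega>))) \<in> borel_measurable M"
      using hatuN_m uN_meas \<psi>m borel_measurable_continuous_on[OF H0c hatuN_m] by auto
    have "(\<lambda>\<omega>. inner (hat \<omega> (uN \<omega>)) (uN \<omega>) + real_of_ereal (\<psi> (uN \<omega>)) + H0 \<psi> (hat \<omega> (uN \<omega>))) \<in> borel_measurable M"
      by measurable
    then show ?thesis unfolding g2eq[abs_def] .
  qed
  have goal: "integral\<^sup>L M g1 \<le> integral\<^sup>L M g2 + \<epsilon>"
  proof (cases "integrable M g1")
    case True
    have g2int: "integrable M g2"
    proof (rule Bochner_Integration.integrable_bound[where f="\<lambda>\<omega>. g1 \<omega> + h \<omega>"])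
      show "integrable M (\<lambda>\<omega>. g1 \<omega> + h \<omega>)" using True hint by simp
      show "g2 \<in> borel_measurable M" by (rule g2m)
      show "AE \<omega> in M. norm (g2 \<omega>) \<le> norm (g1 \<omega> + h \<omega>)"
        using g21 g2nn g1nn h0 by (intro AE_I2) (smt (verit) real_norm_def)
    qed
    have "integral\<^sup>L M g1 \<le> integral\<^sup>L M (\<lambda>\<omega>. g2 \<omega> + h \<omega>)"
      using True g2int hint g12 by (intro integral_mono) auto
    also have "\<dots> = integral\<^sup>L M g2 + integral\<^sup>L M h" using g2int hint by simp
    finally show ?thesis using Eh_le by linarith
  next
    case False
    then have "integral\<^sup>L M g1 = 0" by (rule not_integrable_integral_eq)
    moreover have "0 \<le> integral\<^sup>L M g2" using g2nn by (intro integral_nonneg_AE) auto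
    ultimately show ?thesis using \<epsilon>_pos by linarith
  qed
  then show ?thesis unfolding g1_def g2_def .
qed

end
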